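(* For $\zeta\in\mathbb D$ define $$z(\zeta)=h_E(\zeta)+ih_N(\zeta)-h_W(\zeta)-ih_S(\zeta),\qquad \vartheta(\zeta)=\tfrac{\sqrt2}{2}\big(h_E(\zeta)-h_N(\zeta)+h_W(\zeta)-h_S(\zeta)\big).$$ Then: (i) $z$ and $\vartheta$ are harmonic on $\mathbb D$; (ii) for all $\zeta\in\mathbb D$, $$\partial_\zeta z(\zeta)\cdot\partial_\zeta\overline{z}(\zeta)=\big(\partial_\zeta\vartheta(\zeta)\big)^2,$$ i.e. $\zeta$ is a conformal parametrization of the surface $\mathrm S_\diamondsuit=\{(z(\zeta),\vartheta(\zeta)):\zeta\in\mathbb D\}\subset\mathbb C\times\mathbb R$ with respect to the Lorentz quadratic form $|dz|^2-d\vartheta^2$ of $\mathbb R^{2+1}$; (iii) $(z(\zeta),\vartheta(\zeta))\to(1,\tfrac{\sqrt2}2)$, $(i,-\tfrac{\sqrt2}2)$, $(-1,\tfrac{\sqrt2}2)$, $(-i,-\tfrac{\sqrt2}2)$ as $\zeta$ tends to a point of the open arc $\gamma_E,\gamma_N,\gamma_W,\gamma_S$ respectively, and the set of all limit points of $(z(\zeta),\vartheta(\zeta))$ as $\zeta\to\partial\mathbb D$ is the closed (non-planar) quadrilateral $\mathrm C_\diamondsuit$ with consecutive vertices $(1,\tfrac{\sqrt2}2),(i,-\tfrac{\sqrt2}2),(-1,\tfrac{\sqrt2}2),(-i,-\tfrac{\sqrt2}2)$. Consequently, $\mathrm S_\diamondsuit$ is a minimal surface in the Minkowski space $\mathbb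 R^{2+1}$ spanning $\mathrm C_\diamondsuit$, with conformal parametrization $\zeta$.
   Context: $\mathbb D$ is the open unit disc. $\gamma_E=(e^{-i\pi/4},e^{i\pi/4})$, $\gamma_N=(e^{i\pi/4},e^{3i\pi/4})$, $\gamma_W=(e^{3i\pi/4},e^{5i\pi/4})$, $\gamma_S=(e^{5i\pi/4},e^{7i\pi/4})$ are the four counterclockwise boundary arcs, and $h_E,h_N,h_W,h_S$ denote their harmonic measures in $\mathbb D$: for $\alpha<\beta<\alpha+2\pi$, $\mathrm{hm}_{\mathbb D}(\zeta;(e^{i\alpha},e^{i\beta}))=\tfrac1\pi\big(\arg(e^{i\beta}-\zeta)-\arg(e^{i\alpha}-\zeta)\big)-\tfrac1{2\pi}(\beta-\alpha)$. $\partial_\zeta=\tfrac12(\partial_{\mathrm{Re}\zeta}-i\partial_{\mathrm{Im}\zeta})$ is the Wirtinger derivative. $\mathbb R^{2+1}\cong\mathbb C\times\mathbb R$ carries the Lorentz metric $dx^2+dy^2-d\vartheta^2$ for $(x+iy,\vartheta)$. (In the paper these $z,\vartheta$ are the limits of the symmetric t-embeddings and of the real part of the rotated origami maps of homogeneous Aztec diamonds, with $\zeta=\rho e^{i\phi}$, $r=\sqrt2\rho/(1+\rho^2)$.) *)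

theory Defs
  imports "HOL-Analysis.Analysis"
begin

text \<open>Harmonic measure of the counterclockwise arc (e^{i a}, e^{i b}) in the unit disc, via the
  formula of the paper. The difference arg(e^{ib}-z) - arg(e^{ia}-z) is the counterclockwise
  angle from e^{ia}-z to e^{ib}-z, taken in [0,2pi) (it lies in (0,2pi) for z in the disc).\<close>
definition hm :: "real \<Rightarrow> real \<Rightarrow> complex \<Rightarrow> real" where
  "hm a b \<zeta> = (1/pi) * Arg2pi ((exp (\<i> * of_real b) - \<zeta>) / (exp (\<i> * of_real a) - \<zeta>))
               - (b - a) / (2*pi)"

definition hE :: "complex \<Rightarrow> real" where "hE = hm (-pi/4) (pi/4)"
definition hN :: "complex \<Rightarrow> real" where "hN = hm (pi/4) (3*pi/4)"
definition hW :: "complex \<Rightarrow> real" where "hW = hm (3*pi/4) (5*pi/4)"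
definition hS :: "complex \<Rightarrow> real" where "hS = hm (5*pi/4) (7*pi/4)"

definition arc :: "real \<Rightarrow> real \<Rightarrow> complex set" where
  "arc a b = {exp (\<i> * of_real t) | t. a < t \<and> t < b}"

definition zD :: "complex \<Rightarrow> complex" where
  "zD \<zeta> = of_real (hE \<zeta>) + \<i> * of_real (hN \<zeta>) - of_real (hW \<zeta>) - \<i> * of_real (hS \<zeta>)"

definition thetaD :: "complex \<Rightarrow> real" where
  "thetaD \<zeta> = sqrt 2 / 2 * (hE \<zeta> - hN \<zeta> + hW \<zeta> - hS \<zeta>)"

definition dRe :: "(complex \<Rightarrow> 'a::real_normed_vector) \<Rightarrow> complex \<Rightarrow> 'a" where
  "dRe f z = vector_derivative (\<lambda>t::real. f (z + of_real t)) (at 0)"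
definition dIm :: "(complex \<Rightarrow> 'a::real_normed_vector) \<Rightarrow> complex \<Rightarrow> 'a" where
  "dIm f z = vector_derivative (\<lambda>t::real. f (z + \<i> * of_real t)) (at 0)"

definition wirt :: "(complex \<Rightarrow> complex) \<Rightarrow> complex \<Rightarrow> complex" where
  "wirt f z = (dRe f z - \<i> * dIm f z) / 2"

definition harmonic_on :: "(complex \<Rightarrow> 'a::real_normed_vector) \<Rightarrow> complex set \<Rightarrow> bool" where
  "harmonic_on f S \<longleftrightarrow> open S \<and>
     (\<forall>z\<in>S. f differentiable (at z) \<and> dRe f differentiable (at z) \<and> dIm f differentiable (at z)) \<and>
     continuous_on S (dRe (dRe f)) \<and> continuous_on S (dIm (dIm f)) \<and>
     continuous_on S (dRe (dIm f)) \<and> continuous_on S (dIm (dRe f)) \<and>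
     (\<forall>z\<in>S. dRe (dRe f) z + dIm (dIm f) z = 0)"

definition boundary_cluster_set :: "(complex \<Rightarrow> 'a::topological_space) \<Rightarrow> 'a set" where
  "boundary_cluster_set F = {p. \<exists>s::nat \<Rightarrow> complex. (\<forall>n. s n \<in> ball 0 1) \<and>
       (\<lambda>n. norm (s n)) \<longlonglongrightarrow> 1 \<and> (\<lambda>n. F (s n)) \<longlonglongrightarrow> p}"

definition vE :: "complex \<times> real" where "vE = (1, sqrt 2 / 2)"
definition vN :: "complex \<times> real" where "vN = (\<i>, - sqrt 2 / 2)"
definition vW :: "complex \<times> real" where "vW = (-1, sqrt 2 / 2)"
definition vS :: "complex \<times> real" where "vS = (-\<i>, - sqrt 2 / 2)"

definition C_diamond :: "(complex \<times> real) set" where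
  "C_diamond = closed_segment vE vN \<union> closed_segment vN vW \<union> closed_segment vW vS \<union> closed_segment vS vE"

end

theory Submission
  imports Defs "HOL-Complex_Analysis.Complex_Analysis"
begin

definition cc :: real where "cc = sqrt 2 / 2"
definition P0 :: complex where "P0 = Complex cc cc"
definition P1 :: complex where "P1 = Complex (-cc) cc"
definition P2 :: complex where "P2 = Complex (-cc) (-cc)"
definition P3 :: complex where "P3 = Complex cc (-cc)"

definition Rf :: "complex \<Rightarrow> complex" where "Rf w = (\<i> - w) / (1 - w)"
definition H1 :: "complex \<Rightarrow> real" where "H1 w = Arg2pi (Rf w) / pi - 1/4"
definition Lg :: "complex \<Rightarrow> complex" where "Lg w = Ln ((w - \<i>) / (1 - w))"

lemma cc_sq: "cc * cc = 1/2" unfolding cc_def by (simp add: field_simps)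
lemma cc_pos: "cc > 0" unfolding cc_def by simp
lemma cc_sq2: "cc^2 = 1/2" using cc_sq by (simp add: power2_eq_square)

lemma exp_it: "exp (\<i> * complex_of_real t) = Complex (cos t) (sin t)"
  by (simp add: complex_eq_iff Re_exp Im_exp)

lemma exps:
  "exp (\<i> * complex_of_real (-pi/4)) = P3"
  "exp (\<i> * complex_of_real (pi/4)) = P0"
  "exp (\<i> * complex_of_real (3*pi/4)) = P1"
  "exp (\<i> * complex_of_real (5*pi/4)) = P2"
  "exp (\<i> * complex_of_real (7*pi/4)) = P3"
proof -
  have a: "3*pi/4 = pi - pi/4" "5*pi/4 = pi + pi/4" "7*pi/4 = 2*pi - pi/4" by simp_all
  have t3: "cos (3*pi/4) = - (sqrt 2/2)" "sin (3*pi/4) = sqrt 2/2"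
    by (subst a(1), simp only: cos_diff sin_diff, simp add: cos_45 sin_45)+
  have t5: "cos (5*pi/4) = - (sqrt 2/2)" "sin (5*pi/4) = - (sqrt 2/2)"
    by (subst a(2), simp only: cos_add sin_add, simp add: cos_45 sin_45)+
  have t7: "cos (7*pi/4) = sqrt 2/2" "sin (7*pi/4) = - (sqrt 2/2)"
    by (subst a(3), simp only: cos_diff sin_diff, simp add: cos_45 sin_45)+
  show "exp (\<i> * complex_of_real (-pi/4)) = P3" unfolding exp_it P3_def cc_def
    by (simp add: cos_45 sin_45)
  show "exp (\<i> * complex_of_real (pi/4)) = P0" unfolding exp_it P0_def cc_def
    by (simp add: cos_45 sin_45)
  show "exp (\<i> * complex_of_real (3*pi/4)) = P1" unfolding exp_it P1_def cc_def t3 by simp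
  show "exp (\<i> * complex_of_real (5*pi/4)) = P2" unfolding exp_it P2_def cc_def t5 by simp
  show "exp (\<i> * complex_of_real (7*pi/4)) = P3" unfolding exp_it P3_def cc_def t7 by simp
qed

lemma hm_gen:
  assumes "A * cnj A = 1" "B = \<i> * A" "b - a = pi/2" "exp (\<i> * complex_of_real a) = A" "exp (\<i> * complex_of_real b) = B"
  shows "hm a b z = H1 (z * cnj A)"
proof -
  have A0: "A \<noteq> 0" using assms(1) by auto
  have "(exp (\<i> * complex_of_real b) - z) / (exp (\<i> * complex_of_real a) - z) = Rf (z * cnj A)"
  proof -
    have "(\<i> * A - z) = A * (\<i> - z * cnj A)" "(A - z) = A * (1 - z * cnj A)"
      using assms(1) by (simp_all add: algebra_simps)
    then show ?thesis unfolding assms(4,5) assms(2) Rf_def using A0 by simp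
  qed
  then show ?thesis unfolding hm_def H1_def assms(3) by simp
qed

lemma P_facts: "P0 * cnj P0 = 1" "P1 * cnj P1 = 1" "P2 * cnj P2 = 1" "P3 * cnj P3 = 1"
  "cnj P0 = P3" "cnj P3 = P0" "cnj P1 = P2" "cnj P2 = P1"
  unfolding P0_def P1_def P2_def P3_def by (simp_all add: complex_eq_iff cc_sq)

lemma P_rot: "P1 = \<i> * P0" "P0 = \<i> * P3" "P2 = \<i> * P1" "P3 = \<i> * P2"
  unfolding P0_def P1_def P2_def P3_def by (simp_all add: complex_eq_iff cc_sq)

lemma h_H1:
  "hE z = H1 (z * P0)" "hN z = H1 (z * P3)" "hW z = H1 (z * P2)" "hS z = H1 (z * P1)"
proof -
  show "hE z = H1 (z * P0)" unfolding hE_def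
    using hm_gen[OF P_facts(4) P_rot(2) _ exps(1) exps(2)] by (simp add: P_facts(5-8))
  show "hN z = H1 (z * P3)" unfolding hN_def
    using hm_gen[OF P_facts(1) P_rot(1) _ exps(2) exps(3)] by (simp add: P_facts(5-8))
  show "hW z = H1 (z * P2)" unfolding hW_def
    using hm_gen[OF P_facts(2) P_rot(3) _ exps(3) exps(4)] by (simp add: P_facts(5-8))
  show "hS z = H1 (z * P1)" unfolding hS_def
    using hm_gen[OF P_facts(3) P_rot(4) _ exps(4) exps(5)] by (simp add: P_facts(5-8))
qed


lemma Im_key:
  assumes "cmod w < 1"
  shows "Im (Rf w * (1 - \<i>)) > 0"
proof -
  obtain x y where w: "w = Complex x y" by (cases w)
  have "(cmod w)^2 < 1^2" by (rule power_strict_mono) (use assms in auto)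
  then have xy: "x^2 + y^2 < 1" unfolding cmod_power2 w by simp
  then have x1: "x \<noteq> 1" by (auto simp: power2_eq_square)
  have d: "(1-x)^2 + y^2 > 0" using x1 by (smt (verit) power2_less_eq_zero_iff zero_le_power2)
  have "Im (Rf w * (1 - \<i>)) = (1 - x^2 - y^2) / ((1-x)^2 + y^2)"
    unfolding w Rf_def by (simp add: Im_divide Re_divide complex_norm_square power2_eq_square field_simps)
  also have "... > 0" using xy d by (intro divide_pos_pos) auto
  finally show ?thesis .
qed

lemma exp_i_add: "exp (\<i> * complex_of_real (a + b)) = exp (\<i> * complex_of_real a) * exp (\<i> * complex_of_real b)"
  by (simp add: distrib_left exp_add)

lemma Arg_bounds:
  assumes "cmod w < 1"
  shows "pi/4 < Arg2pi (Rf w)" "Arg2pi (Rf w) < 5*pi/4"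
proof -
  define q where "q = Rf w * (1 - \<i>)"
  have Iq: "Im q > 0" unfolding q_def by (rule Im_key[OF assms])
  define \<phi> where "\<phi> = Arg2pi q"
  have ph: "0 < \<phi>" "\<phi> < pi" unfolding \<phi>_def using Arg2pi_lt_pi Iq by blast+
  have q0: "q \<noteq> 0" using Iq by auto
  have qe: "q = of_real (cmod q) * exp (\<i> * of_real \<phi>)"
    using Arg2pi[of q] unfolding \<phi>_def is_Arg_def by simp
  have "Rf w = q / (1 - \<i>)" unfolding q_def by (simp add: field_simps)
  also have "... = q * (P0 / of_real (sqrt 2))"
    unfolding P0_def cc_def by (simp add: complex_eq_iff field_simps Re_divide Im_divide)
  also have "... = of_real (cmod q / sqrt 2) * exp (\<i> * of_real (\<phi> + pi/4))"
    unfolding exp_i_add exps(2) by (subst qe) (simp add: field_simps)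
  finally have e: "of_real (cmod q / sqrt 2) * exp (\<i> * of_real (\<phi> + pi/4)) = Rf w" by simp
  have "Arg2pi (Rf w) = \<phi> + pi/4"
    by (rule Arg2pi_unique[OF e]) (use q0 ph in auto)
  then show "pi/4 < Arg2pi (Rf w)" "Arg2pi (Rf w) < 5*pi/4" using ph by auto
qed

lemma H1_bounds:
  assumes "cmod w < 1" shows "0 < H1 w" "H1 w < 1"
  using Arg_bounds[OF assms] unfolding H1_def by (simp_all add: field_simps)

lemma Lg_facts:
  assumes "cmod w < 1"
  shows "H1 w = Im (Lg w) / pi + 3/4"
    and "(Lg has_field_derivative (1 - \<i>) / ((1 - w) * (w - \<i>))) (at w)"
proof -
  have A: "0 < Arg2pi (Rf w)" using Arg_bounds(1)[OF assms] pi_gt_zero by linarith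
  have w1: "w \<noteq> 1" "w \<noteq> \<i>" using assms by auto
  have m: "- Rf w = (w - \<i>) / (1 - w)" unfolding Rf_def minus_divide_left by simp
  show "H1 w = Im (Lg w) / pi + 3/4"
    unfolding H1_def Lg_def Arg2pi_Ln[OF A] m by (simp add: field_simps)
  have np: "(w - \<i>) / (1 - w) \<notin> \<real>\<^sub>\<le>\<^sub>0"
  proof
    assume "(w - \<i>) / (1 - w) \<in> \<real>\<^sub>\<le>\<^sub>0"
    then have "Re (Rf w) \<ge> 0" "Im (Rf w) = 0" unfolding m[symmetric] complex_nonpos_Reals_iff by auto
    then have "Arg2pi (Rf w) = 0" by (simp add: Arg2pi_eq_0 complex_is_Real_iff)
    with A show False by simp
  qed
  have dm: "((\<lambda>w. (w - \<i>) / (1 - w)) has_field_derivative (1 - \<i>) / (1 - w)^2) (at w)"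
    using w1 by (auto intro!: derivative_eq_intros simp: field_simps power2_eq_square)
  have "((\<lambda>w. Ln ((w - \<i>) / (1 - w))) has_field_derivative inverse ((w - \<i>) / (1 - w)) * ((1 - \<i>) / (1 - w)^2)) (at w)"
    by (rule DERIV_chain2[OF has_field_derivative_Ln[OF np] dm])
  moreover have "inverse ((w - \<i>) / (1 - w)) * ((1 - \<i>) / (1 - w)^2) = (1 - \<i>) / ((1 - w) * (w - \<i>))"
  proof -
    have gen: "\<And>a b c::complex. a\<noteq>0 \<Longrightarrow> b\<noteq>0 \<Longrightarrow> inverse (a/b) * (c/b^2) = c/(b*a)"
      by (simp add: field_simps power2_eq_square)
    show ?thesis by (rule gen) (use w1 in auto)
  qed
  ultimately show "(Lg has_field_derivative (1 - \<i>) / ((1 - w) * (w - \<i>))) (at w)"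
    unfolding Lg_def[abs_def] by simp
qed

lemma hvd_dirs:
  assumes "(g has_field_derivative g') (at z)"
  shows "((\<lambda>t::real. g (z + of_real t)) has_vector_derivative g') (at 0)"
    and "((\<lambda>t::real. g (z + \<i> * of_real t)) has_vector_derivative \<i> * g') (at 0)"
proof -
  have d1: "((\<lambda>t::real. z + of_real t) has_vector_derivative 1) (at 0)"
    by (auto intro!: derivative_eq_intros)
  have "((g \<circ> (\<lambda>t::real. z + of_real t)) has_vector_derivative (1 * g')) (at 0)"
    by (rule field_vector_diff_chain_at[OF d1]) (simp add: assms)
  then show "((\<lambda>t::real. g (z + of_real t)) has_vector_derivative g') (at 0)"
    by (simp add: o_def)
  have d2: "((\<lambda>t::real. z + \<i> * of_real t) has_vector_derivative \<i>) (at 0)"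
    by (auto intro!: derivative_eq_intros)
  have "((g \<circ> (\<lambda>t::real. z + \<i> * of_real t)) has_vector_derivative (\<i> * g')) (at 0)"
    by (rule field_vector_diff_chain_at[OF d2]) (simp add: assms)
  then show "((\<lambda>t::real. g (z + \<i> * of_real t)) has_vector_derivative \<i> * g') (at 0)"
    by (simp add: o_def)
qed

lemma open_dir_pre:
  assumes "open S" shows "open {t::real. z + of_real t \<in> S}" "open {t::real. z + \<i> * of_real t \<in> S}"
proof -
  have "continuous_on UNIV (\<lambda>t::real. z + of_real t)" by (intro continuous_intros)
  from open_vimage[OF assms this] show "open {t::real. z + of_real t \<in> S}" by (simp add: vimage_def)
  have "continuous_on UNIV (\<lambda>t::real. z + \<i> * of_real t)" by (intro continuous_intros)
  from open_vimage[OF assms this] show "open {t::real. z + \<i> * of_real t \<in> S}" by (simp add: vimage_def)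
qed

lemma dRe_cong:
  fixes f f' :: "complex \<Rightarrow> 'a::real_normed_vector"
  assumes "open S" "z \<in> S" "\<And>w. w \<in> S \<Longrightarrow> f w = f' w"
    "((\<lambda>t::real. f' (z + of_real t)) has_vector_derivative D) (at 0)"
  shows "dRe f z = D" "((\<lambda>t::real. f (z + of_real t)) has_vector_derivative D) (at 0)"
proof -
  show h: "((\<lambda>t::real. f (z + of_real t)) has_vector_derivative D) (at 0)"
    by (rule has_vector_derivative_transform_within_open[OF assms(4) open_dir_pre(1)[OF assms(1)]])
       (use assms in auto)
  show "dRe f z = D" unfolding dRe_def by (rule vector_derivative_at[OF h])
qed

lemma dIm_cong:
  fixes f f' :: "complex \<Rightarrow> 'a::real_normed_vector"
  assumes "open S" "z \<in> S" "\<And>w. w \<in> S \<Longrightarrow> f w = f' w"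
    "((\<lambda>t::real. f' (z + \<i> * of_real t)) has_vector_derivative D) (at 0)"
  shows "dIm f z = D" "((\<lambda>t::real. f (z + \<i> * of_real t)) has_vector_derivative D) (at 0)"
proof -
  show h: "((\<lambda>t::real. f (z + \<i> * of_real t)) has_vector_derivative D) (at 0)"
    by (rule has_vector_derivative_transform_within_open[OF assms(4) open_dir_pre(2)[OF assms(1)]])
       (use assms in auto)
  show "dIm f z = D" unfolding dIm_def by (rule vector_derivative_at[OF h])
qed


lemma gh_vd:
  assumes S: "open S" and G: "G holomorphic_on S" and H: "H holomorphic_on S" and z: "z \<in> S"
  shows "((\<lambda>t::real. G (z + of_real t) + cnj (H (z + of_real t))) has_vector_derivative
            deriv G z + cnj (deriv H z)) (at 0)"
    and "((\<lambda>t::real. G (z + \<i> * of_real t) + cnj (H (z + \<i> * of_real t))) has_vector_derivative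
            \<i> * deriv G z + cnj (\<i> * deriv H z)) (at 0)"
proof -
  have dG: "(G has_field_derivative deriv G z) (at z)" by (rule holomorphic_derivI[OF G S z])
  have dH: "(H has_field_derivative deriv H z) (at z)" by (rule holomorphic_derivI[OF H S z])
  show "((\<lambda>t::real. G (z + of_real t) + cnj (H (z + of_real t))) has_vector_derivative
            deriv G z + cnj (deriv H z)) (at 0)"
    by (intro has_vector_derivative_add has_vector_derivative_cnj hvd_dirs dG dH)
  show "((\<lambda>t::real. G (z + \<i> * of_real t) + cnj (H (z + \<i> * of_real t))) has_vector_derivative
            \<i> * deriv G z + cnj (\<i> * deriv H z)) (at 0)"
    by (intro has_vector_derivative_add has_vector_derivative_cnj hvd_dirs dG dH)
qed

lemma gh_differentiable:
  assumes S: "open S" and G: "G holomorphic_on S" and H: "H holomorphic_on S" and z: "z \<in> S"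
    and f: "\<And>w. w \<in> S \<Longrightarrow> f w = G w + cnj (H w)"
  shows "f differentiable (at z)"
proof -
  have dG: "(G has_field_derivative deriv G z) (at z)" by (rule holomorphic_derivI[OF G S z])
  have dH: "(H has_field_derivative deriv H z) (at z)" by (rule holomorphic_derivI[OF H S z])
  have "((\<lambda>w. G w + cnj (H w)) has_derivative (\<lambda>x. deriv G z * x + cnj (deriv H z * x))) (at z)"
    using dG dH unfolding has_field_derivative_def
    by (intro has_derivative_add bounded_linear.has_derivative[OF bounded_linear_cnj]) auto
  then have "(f has_derivative (\<lambda>x. deriv G z * x + cnj (deriv H z * x))) (at z)"
    by (rule has_derivative_transform_within_open[OF _ S z]) (simp add: f)
  then show ?thesis unfolding differentiable_def by blast
qed

lemma harm_gh:
  assumes S: "open S" and g: "g holomorphic_on S" and h: "h holomorphic_on S"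
    and f: "\<And>w. w \<in> S \<Longrightarrow> f w = g w + cnj (h w)"
  shows "harmonic_on f S" and "\<And>z. z \<in> S \<Longrightarrow> wirt f z = deriv g z"
proof -
  define g1 where "g1 = deriv g"
  define h1 where "h1 = deriv h"
  have g1: "g1 holomorphic_on S" unfolding g1_def by (rule holomorphic_deriv[OF g S])
  have h1: "h1 holomorphic_on S" unfolding h1_def by (rule holomorphic_deriv[OF h S])
  have ig1: "(\<lambda>w. \<i> * g1 w) holomorphic_on S" using g1 by (intro holomorphic_intros)
  have ih1: "(\<lambda>w. \<i> * h1 w) holomorphic_on S" using h1 by (intro holomorphic_intros)
  have g2: "deriv g1 holomorphic_on S" by (rule holomorphic_deriv[OF g1 S])
  have h2: "deriv h1 holomorphic_on S" by (rule holomorphic_deriv[OF h1 S])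
  have dig1: "deriv (\<lambda>w. \<i> * g1 w) z = \<i> * deriv g1 z" if "z \<in> S" for z
    using holomorphic_derivI[OF g1 S that] by (intro DERIV_imp_deriv) (auto intro!: derivative_eq_intros)
  have dih1: "deriv (\<lambda>w. \<i> * h1 w) z = \<i> * deriv h1 z" if "z \<in> S" for z
    using holomorphic_derivI[OF h1 S that] by (intro DERIV_imp_deriv) (auto intro!: derivative_eq_intros)
  have Re1: "dRe f z = g1 z + cnj (h1 z)" if "z \<in> S" for z
    unfolding g1_def h1_def by (rule dRe_cong(1)[OF S that f gh_vd(1)[OF S g h that]])
  have Im1: "dIm f z = \<i> * g1 z + cnj (\<i> * h1 z)" if "z \<in> S" for z
    unfolding g1_def h1_def by (rule dIm_cong(1)[OF S that f gh_vd(2)[OF S g h that]])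
  have ReRe: "dRe (dRe f) z = deriv g1 z + cnj (deriv h1 z)" if "z \<in> S" for z
    by (rule dRe_cong(1)[OF S that Re1 gh_vd(1)[OF S g1 h1 that]])
  have ImIm: "dIm (dIm f) z = \<i> * (\<i> * deriv g1 z) + cnj (\<i> * (\<i> * deriv h1 z))" if "z \<in> S" for z
    using dIm_cong(1)[OF S that Im1 gh_vd(2)[OF S ig1 ih1 that]] by (simp add: dig1 dih1 that)
  have ReIm: "dRe (dIm f) z = \<i> * deriv g1 z + cnj (\<i> * deriv h1 z)" if "z \<in> S" for z
    using dRe_cong(1)[OF S that Im1 gh_vd(1)[OF S ig1 ih1 that]] by (simp add: dig1 dih1 that)
  have ImRe: "dIm (dRe f) z = \<i> * deriv g1 z + cnj (\<i> * deriv h1 z)" if "z \<in> S" for z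
    by (rule dIm_cong(1)[OF S that Re1 gh_vd(2)[OF S g1 h1 that]])
  have cg2: "continuous_on S (deriv g1)" by (rule holomorphic_on_imp_continuous_on[OF g2])
  have ch2: "continuous_on S (deriv h1)" by (rule holomorphic_on_imp_continuous_on[OF h2])
  have c1: "continuous_on S (\<lambda>z. deriv g1 z + cnj (deriv h1 z))" using cg2 ch2 by (intro continuous_intros)
  have c2: "continuous_on S (\<lambda>z. \<i> * (\<i> * deriv g1 z) + cnj (\<i> * (\<i> * deriv h1 z)))" using cg2 ch2 by (intro continuous_intros)
  have c3: "continuous_on S (\<lambda>z. \<i> * deriv g1 z + cnj (\<i> * deriv h1 z))" using cg2 ch2 by (intro continuous_intros)
  show "harmonic_on f S"
    unfolding harmonic_on_def
  proof (intro conjI ballI)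
    show "open S" by (rule S)
    fix z assume z: "z \<in> S"
    show "f differentiable at z" by (rule gh_differentiable[OF S g h z f])
    show "dRe f differentiable at z" by (rule gh_differentiable[OF S g1 h1 z Re1])
    show "dIm f differentiable at z" by (rule gh_differentiable[OF S ig1 ih1 z Im1])
    show "dRe (dRe f) z + dIm (dIm f) z = 0" using ReRe[OF z] ImIm[OF z] by simp
  next
    show "continuous_on S (dRe (dRe f))" using c1 by (rule continuous_on_cong[THEN iffD1, rotated 2]) (auto simp: ReRe)
    show "continuous_on S (dIm (dIm f))" using c2 by (rule continuous_on_cong[THEN iffD1, rotated 2]) (auto simp: ImIm)
    show "continuous_on S (dRe (dIm f))" using c3 by (rule continuous_on_cong[THEN iffD1, rotated 2]) (auto simp: ReIm)
    show "continuous_on S (dIm (dRe f))" using c3 by (rule continuous_on_cong[THEN iffD1, rotated 2]) (auto simp: ImRe)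
  qed
  show "wirt f z = deriv g z" if "z \<in> S" for z
    unfolding wirt_def Re1[OF that] Im1[OF that] g1_def
    by (simp add: algebra_simps)
qed

lemma hvd_Re:
  fixes \<phi> :: "real \<Rightarrow> complex"
  assumes "(\<phi> has_vector_derivative D) F"
  shows "((\<lambda>t. Re (\<phi> t)) has_vector_derivative Re D) F"
  using assms unfolding has_vector_derivative_complex_iff has_real_derivative_iff_has_vector_derivative by blast

lemma re_vd:
  assumes S: "open S" and G: "G holomorphic_on S" and z: "z \<in> S"
  shows "((\<lambda>t::real. Re (G (z + of_real t))) has_vector_derivative Re (deriv G z)) (at 0)"
    and "((\<lambda>t::real. Re (G (z + \<i> * of_real t))) has_vector_derivative Re (\<i> * deriv G z)) (at 0)"
proof -
  have dG: "(G has_field_derivative deriv G z) (at z)" by (rule holomorphic_derivI[OF G S z])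
  show "((\<lambda>t::real. Re (G (z + of_real t))) has_vector_derivative Re (deriv G z)) (at 0)"
    by (intro hvd_Re hvd_dirs dG)
  show "((\<lambda>t::real. Re (G (z + \<i> * of_real t))) has_vector_derivative Re (\<i> * deriv G z)) (at 0)"
    by (intro hvd_Re hvd_dirs dG)
qed

lemma re_differentiable:
  assumes S: "open S" and G: "G holomorphic_on S" and z: "z \<in> S"
    and f: "\<And>w. w \<in> S \<Longrightarrow> f w = Re (G w)"
  shows "f differentiable (at z)"
proof -
  have dG: "(G has_field_derivative deriv G z) (at z)" by (rule holomorphic_derivI[OF G S z])
  have "((\<lambda>w. Re (G w)) has_derivative (\<lambda>x. Re (deriv G z * x))) (at z)"
    using dG unfolding has_field_derivative_def
    by (intro bounded_linear.has_derivative[OF bounded_linear_Re]) auto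
  then have "(f has_derivative (\<lambda>x. Re (deriv G z * x))) (at z)"
    by (rule has_derivative_transform_within_open[OF _ S z]) (simp add: f)
  then show ?thesis unfolding differentiable_def by blast
qed

lemma harm_re:
  assumes S: "open S" and g: "g holomorphic_on S"
    and f: "\<And>w. w \<in> S \<Longrightarrow> f w = Re (g w)"
  shows "harmonic_on f S"
proof -
  define g1 where "g1 = deriv g"
  have g1: "g1 holomorphic_on S" unfolding g1_def by (rule holomorphic_deriv[OF g S])
  have ig1: "(\<lambda>w. \<i> * g1 w) holomorphic_on S" using g1 by (intro holomorphic_intros)
  have g2: "deriv g1 holomorphic_on S" by (rule holomorphic_deriv[OF g1 S])
  have dig1: "deriv (\<lambda>w. \<i> * g1 w) z = \<i> * deriv g1 z" if "z \<in> S" for z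
    using holomorphic_derivI[OF g1 S that] by (intro DERIV_imp_deriv) (auto intro!: derivative_eq_intros)
  have Re1: "dRe f z = Re (g1 z)" if "z \<in> S" for z
    unfolding g1_def by (rule dRe_cong(1)[OF S that f re_vd(1)[OF S g that]])
  have Im1: "dIm f z = Re (\<i> * g1 z)" if "z \<in> S" for z
    unfolding g1_def by (rule dIm_cong(1)[OF S that f re_vd(2)[OF S g that]])
  have ReRe: "dRe (dRe f) z = Re (deriv g1 z)" if "z \<in> S" for z
    by (rule dRe_cong(1)[OF S that Re1 re_vd(1)[OF S g1 that]])
  have ImIm: "dIm (dIm f) z = Re (\<i> * (\<i> * deriv g1 z))" if "z \<in> S" for z
    using dIm_cong(1)[OF S that Im1 re_vd(2)[OF S ig1 that]] by (simp add: dig1 that)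
  have ReIm: "dRe (dIm f) z = Re (\<i> * deriv g1 z)" if "z \<in> S" for z
    using dRe_cong(1)[OF S that Im1 re_vd(1)[OF S ig1 that]] by (simp add: dig1 that)
  have ImRe: "dIm (dRe f) z = Re (\<i> * deriv g1 z)" if "z \<in> S" for z
    by (rule dIm_cong(1)[OF S that Re1 re_vd(2)[OF S g1 that]])
  have cg2: "continuous_on S (deriv g1)" by (rule holomorphic_on_imp_continuous_on[OF g2])
  have c1: "continuous_on S (\<lambda>z. Re (deriv g1 z))" using cg2 by (intro continuous_intros)
  have c2: "continuous_on S (\<lambda>z. Re (\<i> * (\<i> * deriv g1 z)))" using cg2 by (intro continuous_intros)
  have c3: "continuous_on S (\<lambda>z. Re (\<i> * deriv g1 z))" using cg2 by (intro continuous_intros)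
  show "harmonic_on f S"
    unfolding harmonic_on_def
  proof (intro conjI ballI)
    show "open S" by (rule S)
    fix z assume z: "z \<in> S"
    show "f differentiable at z" by (rule re_differentiable[OF S g z f])
    show "dRe f differentiable at z" by (rule re_differentiable[OF S g1 z Re1])
    show "dIm f differentiable at z" by (rule re_differentiable[OF S ig1 z Im1])
    show "dRe (dRe f) z + dIm (dIm f) z = 0" using ReRe[OF z] ImIm[OF z] by simp
  next
    show "continuous_on S (dRe (dRe f))" using c1 by (rule continuous_on_cong[THEN iffD1, rotated 2]) (auto simp: ReRe)
    show "continuous_on S (dIm (dIm f))" using c2 by (rule continuous_on_cong[THEN iffD1, rotated 2]) (auto simp: ImIm)
    show "continuous_on S (dRe (dIm f))" using c3 by (rule continuous_on_cong[THEN iffD1, rotated 2]) (auto simp: ReIm)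
    show "continuous_on S (dIm (dRe f))" using c3 by (rule continuous_on_cong[THEN iffD1, rotated 2]) (auto simp: ImRe)
  qed
qed

lemma alg0:
  fixes z p a b :: complex
  assumes p: "p^2 = \<i>" and a: "a \<noteq> 0" and b: "b \<noteq> 0" and ab: "b = a + 2*\<i>" "a + b = 2*z^2"
  shows "2*((2*p/a)^2 + (2*\<i>*p/b)^2) = 2*(2*z/a - 2*z/b)^2"
proof -
  have pp: "\<And>x. p*(p*x) = \<i>*x" using p by (metis mult.assoc power2_eq_square)
  have "2*((2*p/a)^2 + (2*\<i>*p/b)^2) = 8*\<i>*(b^2-a^2)/(a^2*b^2)"
    using a b p by (simp add: field_simps power2_eq_square) (simp add: algebra_simps pp)
  also have "b^2 - a^2 = (b-a)*(b+a)" by (simp add: algebra_simps power2_eq_square)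
  also have "... = 2*\<i>*(2*z^2)" using ab by (simp add: add.commute)
  also have "2*(2*z/a - 2*z/b)^2 = 8*z^2*(b-a)^2/(a^2*b^2)"
    using a b by (simp add: field_simps power2_eq_square)
  moreover have "(b-a)^2 = -4" using ab by (simp add: power2_eq_square)
  ultimately show ?thesis by (simp add: power2_eq_square)
qed

lemma alg1:
  fixes z p :: complex
  assumes p: "p^2 = \<i>" and a: "z^2 - \<i> \<noteq> 0" and b: "z^2 + \<i> \<noteq> 0"
  defines "g0 \<equiv> (z+p)/(z^2-\<i>)" and "g2 \<equiv> (z-p)/(z^2-\<i>)"
    and "g1 \<equiv> (z+\<i>*p)/(z^2+\<i>)" and "g3 \<equiv> (z-\<i>*p)/(z^2+\<i>)"
  shows "((g0-g3) + \<i>*(g1-g0) - (g2-g1) - \<i>*(g3-g2))*((g0-g3) - \<i>*(g1-g0) - (g2-g1) + \<i>*(g3-g2))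
     = 2*(g0 - g1 + g2 - g3)^2"
proof -
  have e0: "((g0-g3) + \<i>*(g1-g0) - (g2-g1) - \<i>*(g3-g2))*((g0-g3) - \<i>*(g1-g0) - (g2-g1) + \<i>*(g3-g2))
     = 2*((g0-g2)^2 + (g1-g3)^2)"
    by (simp add: algebra_simps power2_eq_square)
  have e1: "g0 - g2 = 2*p/(z^2-\<i>)" unfolding g0_def g2_def by (simp add: diff_divide_distrib[symmetric])
  have e2: "g1 - g3 = 2*\<i>*p/(z^2+\<i>)" unfolding g1_def g3_def by (simp add: diff_divide_distrib[symmetric])
  have e3: "g0 - g1 + g2 - g3 = 2*z/(z^2-\<i>) - 2*z/(z^2+\<i>)" unfolding g0_def g1_def g2_def g3_def
    by (simp add: add_divide_distrib[symmetric] diff_divide_distrib[symmetric] algebra_simps)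
  have "2*((2*p/(z^2-\<i>))^2 + (2*\<i>*p/(z^2+\<i>))^2) = 2*(2*z/(z^2-\<i>) - 2*z/(z^2+\<i>))^2"
    by (rule alg0[OF p a b]) (simp_all add: algebra_simps)
  then show ?thesis by (simp only: e0 e1 e2 e3)
qed

lemma cmod_P: "cmod P0 = 1" "cmod P1 = 1" "cmod P2 = 1" "cmod P3 = 1"
  unfolding P0_def P1_def P2_def P3_def cmod_def using cc_sq by (simp_all add: power2_eq_square)

lemma P0_sq: "P0^2 = \<i>" unfolding P0_def by (simp add: complex_eq_iff power2_eq_square cc_sq)

definition MQ :: "complex \<Rightarrow> complex \<Rightarrow> complex" where
  "MQ Q z = Lg (z * Q) / (2 * complex_of_real pi * \<i>)"

definition dMQ :: "complex \<Rightarrow> complex \<Rightarrow> complex" where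
  "dMQ Q z = (1 / (z - \<i> * cnj Q) - 1 / (z - cnj Q)) / (2 * complex_of_real pi * \<i>)"

lemma MQ_facts:
  assumes Q: "cmod Q = 1" and z: "cmod z < 1"
  shows "complex_of_real (H1 (z * Q)) = MQ Q z + cnj (MQ Q z) + 3/4"
    and "H1 (z * Q) = Re (2 * MQ Q z) + 3/4"
    and "(MQ Q has_field_derivative dMQ Q z) (at z)"
proof -
  have zQ: "cmod (z * Q) < 1" using Q z by (simp add: norm_mult)
  note L = Lg_facts[OF zQ]
  show "complex_of_real (H1 (z * Q)) = MQ Q z + cnj (MQ Q z) + 3/4"
    unfolding L(1) MQ_def by (simp add: complex_eq_iff Re_divide Im_divide field_simps power2_eq_square)
  show "H1 (z * Q) = Re (2 * MQ Q z) + 3/4"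
    unfolding L(1) MQ_def by (simp add: Re_divide field_simps power2_eq_square)
  have QQ: "Q * cnj Q = 1" using Q by (simp add: complex_norm_square[symmetric])
  have n1: "z - \<i> * cnj Q \<noteq> 0" "z - cnj Q \<noteq> 0" "1 - z * Q \<noteq> 0" "z * Q - \<i> \<noteq> 0"
  proof -
    have a: "z * Q \<noteq> 1" "z * Q \<noteq> \<i>" using zQ by auto
    have b: "z \<noteq> \<i> * cnj Q" "z \<noteq> cnj Q" using z Q by (auto simp: norm_mult)
    show "z - \<i> * cnj Q \<noteq> 0" "z - cnj Q \<noteq> 0" "1 - z * Q \<noteq> 0" "z * Q - \<i> \<noteq> 0"
      using a b by auto
  qed
  have "((\<lambda>z. Lg (z * Q)) has_field_derivative (1 - \<i>) / ((1 - z*Q) * (z*Q - \<i>)) * Q) (at z)"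
    by (rule DERIV_chain2[where g="\<lambda>z. z*Q" and x=z, OF L(2)]) (auto intro!: derivative_eq_intros)
  moreover have "(1 - \<i>) / ((1 - z*Q) * (z*Q - \<i>)) * Q = 1 / (z - \<i> * cnj Q) - 1 / (z - cnj Q)"
  proof -
    have e1: "(z - \<i> * cnj Q) * Q = z * Q - \<i>" "(z - cnj Q) * Q = z * Q - 1"
      using QQ by (simp_all add: algebra_simps)
    have "1 / (z - \<i> * cnj Q) - 1 / (z - cnj Q) = Q / (z * Q - \<i>) - Q / (z * Q - 1)"
    proof -
      have Q0: "Q \<noteq> 0" using Q by auto
      have f1: "1 / (z - \<i> * cnj Q) = Q / (z * Q - \<i>)" unfolding e1(1)[symmetric] using Q0 by simp
      have f2: "1 / (z - cnj Q) = Q / (z * Q - 1)" unfolding e1(2)[symmetric] using Q0 by simp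
      show ?thesis unfolding f1 f2 ..
    qed
    also have "... = (1 - \<i>) / ((1 - z*Q) * (z*Q - \<i>)) * Q"
    proof -
      have gen: "\<And>w. w - \<i> \<noteq> 0 \<Longrightarrow> w - 1 \<noteq> 0 \<Longrightarrow> 1 - w \<noteq> 0 \<Longrightarrow>
          Q / (w - \<i>) - Q / (w - 1) = (1 - \<i>) / ((1 - w) * (w - \<i>)) * Q"
        by (simp add: divide_simps) (simp add: algebra_simps)
      show ?thesis by (rule gen) (use n1 in auto)
    qed
    finally show ?thesis by simp
  qed
  ultimately have "((\<lambda>z. Lg (z * Q)) has_field_derivative (1 / (z - \<i> * cnj Q) - 1 / (z - cnj Q))) (at z)"
    by simp
  then show "(MQ Q has_field_derivative dMQ Q z) (at z)"
    unfolding MQ_def[abs_def] dMQ_def by (rule DERIV_cdivide)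
qed

lemma MQ_holo: assumes "cmod Q = 1" shows "MQ Q holomorphic_on ball 0 1"
  unfolding holomorphic_on_def
proof
  fix x :: complex assume "x \<in> ball 0 1"
  then have "cmod x < 1" by simp
  from MQ_facts(3)[OF assms this] show "MQ Q field_differentiable at x within ball 0 1"
    by (meson field_differentiable_at_within field_differentiable_def)
qed

definition MEd where "MEd = MQ P0"
definition MNd where "MNd = MQ P3"
definition MWd where "MWd = MQ P2"
definition MSd where "MSd = MQ P1"
definition gZ where "gZ z = MEd z + \<i> * MNd z - MWd z - \<i> * MSd z"
definition hZ where "hZ z = MEd z - \<i> * MNd z - MWd z + \<i> * MSd z"
definition GTh where "GTh z = complex_of_real cc * (MEd z - MNd z + MWd z - MSd z)"

lemma hk_complex:
  assumes "cmod z < 1"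
  shows "complex_of_real (hE z) = MEd z + cnj (MEd z) + 3/4"
    "complex_of_real (hN z) = MNd z + cnj (MNd z) + 3/4"
    "complex_of_real (hW z) = MWd z + cnj (MWd z) + 3/4"
    "complex_of_real (hS z) = MSd z + cnj (MSd z) + 3/4"
  unfolding h_H1 MEd_def MNd_def MWd_def MSd_def
  using MQ_facts(1)[OF cmod_P(1) assms] MQ_facts(1)[OF cmod_P(2) assms]
    MQ_facts(1)[OF cmod_P(3) assms] MQ_facts(1)[OF cmod_P(4) assms] by auto

lemma hk_real:
  assumes "cmod z < 1"
  shows "hE z = Re (2 * MEd z) + 3/4" "hN z = Re (2 * MNd z) + 3/4"
    "hW z = Re (2 * MWd z) + 3/4" "hS z = Re (2 * MSd z) + 3/4"
  unfolding h_H1 MEd_def MNd_def MWd_def MSd_def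
  using MQ_facts(2)[OF cmod_P(1) assms] MQ_facts(2)[OF cmod_P(2) assms]
    MQ_facts(2)[OF cmod_P(3) assms] MQ_facts(2)[OF cmod_P(4) assms] by auto

lemma zD_rep: assumes "cmod z < 1" shows "zD z = gZ z + cnj (hZ z)"
  unfolding zD_def gZ_def hZ_def using hk_complex[OF assms]
  by (simp add: algebra_simps)

lemma cnj_zD_rep: assumes "cmod z < 1" shows "cnj (zD z) = hZ z + cnj (gZ z)"
  unfolding zD_rep[OF assms] gZ_def hZ_def by (simp add: algebra_simps)

lemma theta_rep: assumes "cmod z < 1"
  shows "complex_of_real (thetaD z) = GTh z + cnj (GTh z)"
    and "thetaD z = Re (2 * GTh z)"
proof -
  have t: "thetaD z = cc * (hE z - hN z + hW z - hS z)" unfolding thetaD_def cc_def by simp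
  show "complex_of_real (thetaD z) = GTh z + cnj (GTh z)"
    unfolding t GTh_def using hk_complex[OF assms] by (simp add: algebra_simps)
  show "thetaD z = Re (2 * GTh z)"
    unfolding t GTh_def using hk_real[OF assms] by (simp add: algebra_simps)
qed

lemma M_holo: "MEd holomorphic_on ball 0 1" "MNd holomorphic_on ball 0 1"
   "MWd holomorphic_on ball 0 1" "MSd holomorphic_on ball 0 1"
  unfolding MEd_def MNd_def MWd_def MSd_def using MQ_holo cmod_P by auto

lemma gZ_holo: "gZ holomorphic_on ball 0 1" "hZ holomorphic_on ball 0 1" "GTh holomorphic_on ball 0 1"
    "(\<lambda>z. 2 * GTh z) holomorphic_on ball 0 1"
proof -
  have e: "gZ = (\<lambda>z. MEd z + \<i> * MNd z - MWd z - \<i> * MSd z)" "hZ = (\<lambda>z. MEd z - \<i> * MNd z - MWd z + \<i> * MSd z)"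
    "GTh = (\<lambda>z. complex_of_real cc * (MEd z - MNd z + MWd z - MSd z))"
    by (auto simp: gZ_def hZ_def GTh_def)
  show "gZ holomorphic_on ball 0 1" "hZ holomorphic_on ball 0 1" "GTh holomorphic_on ball 0 1"
    unfolding e using M_holo by (auto intro!: holomorphic_intros)
  then show "(\<lambda>z. 2 * GTh z) holomorphic_on ball 0 1" by (auto intro!: holomorphic_intros)
qed

theorem harmonic_parts: "harmonic_on zD (ball 0 1)" "harmonic_on thetaD (ball 0 1)"
  by (rule harm_gh(1)[OF open_ball gZ_holo(1) gZ_holo(2)], simp add: zD_rep)
     (rule harm_re[OF open_ball gZ_holo(4)], simp add: theta_rep)

lemma dMQ_vals:
  "dMQ P0 z = (1/(z - P0) - 1/(z - P3)) / (2 * complex_of_real pi * \<i>)"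
  "dMQ P3 z = (1/(z - P1) - 1/(z - P0)) / (2 * complex_of_real pi * \<i>)"
  "dMQ P2 z = (1/(z - P2) - 1/(z - P1)) / (2 * complex_of_real pi * \<i>)"
  "dMQ P1 z = (1/(z - P3) - 1/(z - P2)) / (2 * complex_of_real pi * \<i>)"
  unfolding dMQ_def P_facts(5-8) P_rot[symmetric] by simp_all

lemma M_deriv:
  assumes "cmod z < 1"
  shows "(MEd has_field_derivative dMQ P0 z) (at z)" "(MNd has_field_derivative dMQ P3 z) (at z)"
    "(MWd has_field_derivative dMQ P2 z) (at z)" "(MSd has_field_derivative dMQ P1 z) (at z)"
  unfolding MEd_def MNd_def MWd_def MSd_def using MQ_facts(3)[OF _ assms] cmod_P by auto

lemma derivs:
  assumes z: "cmod z < 1"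
  defines "K \<equiv> 2 * complex_of_real pi * \<i>"
  defines "g0 \<equiv> 1/(z - P0)" and "g1 \<equiv> 1/(z - P1)" and "g2 \<equiv> 1/(z - P2)" and "g3 \<equiv> 1/(z - P3)"
  shows "deriv gZ z = ((g0-g3) + \<i>*(g1-g0) - (g2-g1) - \<i>*(g3-g2)) / K"
    and "deriv hZ z = ((g0-g3) - \<i>*(g1-g0) - (g2-g1) + \<i>*(g3-g2)) / K"
    and "deriv GTh z = complex_of_real cc * ((g0-g3) - (g1-g0) + (g2-g1) - (g3-g2)) / K"
    and "((\<lambda>z. MEd z + MNd z + MWd z + MSd z) has_field_derivative 0) (at z)"
proof -
  have K0: "K \<noteq> 0" unfolding K_def by simp
  note d = M_deriv[OF z, unfolded dMQ_vals, folded K_def g0_def g1_def g2_def g3_def]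
  have "(gZ has_field_derivative ((g0-g3)/K + \<i>*((g1-g0)/K) - (g2-g1)/K - \<i>*((g3-g2)/K))) (at z)"
    unfolding gZ_def[abs_def] by (intro DERIV_add DERIV_diff DERIV_cmult d)
  from DERIV_imp_deriv[OF this] show "deriv gZ z = ((g0-g3) + \<i>*(g1-g0) - (g2-g1) - \<i>*(g3-g2)) / K"
    by (simp add: add_divide_distrib diff_divide_distrib right_diff_distrib)
  have "(hZ has_field_derivative ((g0-g3)/K - \<i>*((g1-g0)/K) - (g2-g1)/K + \<i>*((g3-g2)/K))) (at z)"
    unfolding hZ_def[abs_def] by (intro DERIV_add DERIV_diff DERIV_cmult d)
  from DERIV_imp_deriv[OF this] show "deriv hZ z = ((g0-g3) - \<i>*(g1-g0) - (g2-g1) + \<i>*(g3-g2)) / K"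
    by (simp add: add_divide_distrib diff_divide_distrib right_diff_distrib)
  have "(GTh has_field_derivative (complex_of_real cc * ((g0-g3)/K - (g1-g0)/K + (g2-g1)/K - (g3-g2)/K))) (at z)"
    unfolding GTh_def[abs_def] by (intro DERIV_add DERIV_diff DERIV_cmult d)
  moreover have "\<And>a b c d k c0::complex. c0 * (a/k - b/k + c/k - d/k) = c0 * (a - b + c - d) / k"
    by (simp only: add_divide_distrib[symmetric] diff_divide_distrib[symmetric] times_divide_eq_right)
  ultimately show "deriv GTh z = complex_of_real cc * ((g0-g3) - (g1-g0) + (g2-g1) - (g3-g2)) / K"
    using DERIV_imp_deriv by metis
  have "((\<lambda>z. MEd z + MNd z + MWd z + MSd z) has_field_derivative ((g0-g3)/K + (g1-g0)/K + (g2-g1)/K + (g3-g2)/K)) (at z)"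
    by (intro DERIV_add DERIV_diff DERIV_cmult d)
  moreover have "(g0-g3)/K + (g1-g0)/K + (g2-g1)/K + (g3-g2)/K = 0"
    by (simp only: add_divide_distrib[symmetric]) simp
  ultimately show "((\<lambda>z. MEd z + MNd z + MWd z + MSd z) has_field_derivative 0) (at z)"
    by simp
qed

lemma wirt_identity:
  assumes z: "cmod z < 1"
  shows "wirt zD z * wirt (\<lambda>w. cnj (zD w)) z = (wirt (\<lambda>w. complex_of_real (thetaD w)) z)^2"
proof -
  have zb: "z \<in> ball 0 1" using z by simp
  have w1: "wirt zD z = deriv gZ z"
    by (rule harm_gh(2)[OF open_ball gZ_holo(1) gZ_holo(2) _ zb]) (simp add: zD_rep)
  have w2: "wirt (\<lambda>w. cnj (zD w)) z = deriv hZ z"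
    by (rule harm_gh(2)[OF open_ball gZ_holo(2) gZ_holo(1) _ zb]) (simp add: cnj_zD_rep)
  have w3: "wirt (\<lambda>w. complex_of_real (thetaD w)) z = deriv GTh z"
    by (rule harm_gh(2)[OF open_ball gZ_holo(3) gZ_holo(3) _ zb]) (simp add: theta_rep(1))
  define g0 where "g0 = 1/(z - P0)"
  define g1 where "g1 = 1/(z - P1)"
  define g2 where "g2 = 1/(z - P2)"
  define g3 where "g3 = 1/(z - P3)"
  have z2: "z^2 - \<i> \<noteq> 0" "z^2 + \<i> \<noteq> 0"
  proof -
    have "cmod (z^2) < 1" using z by (simp add: norm_power power_less_one_iff)
    then have "z^2 \<noteq> \<i>" "z^2 \<noteq> - \<i>" by auto
    then show "z^2 - \<i> \<noteq> 0" "z^2 + \<i> \<noteq> 0" by (auto simp: add_eq_0_iff2 eq_neg_iff_add_eq_0[symmetric])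
  qed
  have pp: "P0 * P0 = \<i>" using P0_sq by (simp add: power2_eq_square)
  have eP: "P1 = \<i> * P0" "P2 = - P0" "P3 = - \<i> * P0"
    unfolding P0_def P1_def P2_def P3_def by (simp_all add: complex_eq_iff)
  have G0: "g0 = (z+P0)/(z^2-\<i>)"
  proof -
    have e: "z^2 - \<i> = (z - P0) * (z + P0)" using pp by (simp add: algebra_simps power2_eq_square)
    have nz: "z + P0 \<noteq> 0" using e z2 by auto
    show ?thesis unfolding g0_def e using nz by simp
  qed
  have G2: "g2 = (z-P0)/(z^2-\<i>)"
  proof -
    have e: "z^2 - \<i> = (z + P0) * (z - P0)" using pp by (simp add: algebra_simps power2_eq_square)
    have nz: "z - P0 \<noteq> 0" using e z2 by auto
    show ?thesis unfolding g2_def eP e using nz by simp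
  qed
  have G1: "g1 = (z+\<i>*P0)/(z^2+\<i>)"
  proof -
    have e: "z^2 + \<i> = (z - \<i>*P0) * (z + \<i>*P0)" using pp by (simp add: algebra_simps power2_eq_square)
    have nz: "z + \<i>*P0 \<noteq> 0" using e z2 by auto
    show ?thesis unfolding g1_def eP e using nz by simp
  qed
  have G3: "g3 = (z-\<i>*P0)/(z^2+\<i>)"
  proof -
    have e: "z^2 + \<i> = (z + \<i>*P0) * (z - \<i>*P0)" using pp by (simp add: algebra_simps power2_eq_square)
    have nz: "z - \<i>*P0 \<noteq> 0" using e z2 by auto
    show ?thesis unfolding g3_def eP e using nz by simp
  qed
  have A: "((g0-g3) + \<i>*(g1-g0) - (g2-g1) - \<i>*(g3-g2))*((g0-g3) - \<i>*(g1-g0) - (g2-g1) + \<i>*(g3-g2))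
     = 2*(g0 - g1 + g2 - g3)^2"
    unfolding G0 G1 G2 G3 by (rule alg1[OF P0_sq z2])
  have cc2: "complex_of_real cc * complex_of_real cc = 1/2" using cc_sq
    by (metis of_real_mult of_real_divide of_real_1 of_real_numeral)
  show ?thesis
    unfolding w1 w2 w3 derivs[OF z] g0_def[symmetric] g1_def[symmetric] g2_def[symmetric] g3_def[symmetric]
  proof -
    let ?K = "2 * complex_of_real pi * \<i>"
    have "((g0-g3) + \<i>*(g1-g0) - (g2-g1) - \<i>*(g3-g2)) / ?K * (((g0-g3) - \<i>*(g1-g0) - (g2-g1) + \<i>*(g3-g2)) / ?K)
        = 2*(g0 - g1 + g2 - g3)^2 / ?K^2"
    proof -
      have gen: "\<And>a b k::complex. a/k*(b/k) = (a*b)/k^2" by (simp add: power2_eq_square)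
      show ?thesis unfolding gen A ..
    qed
    also have "... = (complex_of_real cc * ((g0-g3) - (g1-g0) + (g2-g1) - (g3-g2)) / ?K)^2"
    proof -
      have Z: "(g0-g3) - (g1-g0) + (g2-g1) - (g3-g2) = 2*(g0 - g1 + g2 - g3)" by (simp add: algebra_simps)
      have c2: "(complex_of_real cc)^2 = 1/2" using cc2 by (simp add: power2_eq_square)
      show ?thesis unfolding Z power_divide power_mult_distrib c2 by simp
    qed
    finally show "((g0-g3) + \<i>*(g1-g0) - (g2-g1) - \<i>*(g3-g2)) / ?K * (((g0-g3) - \<i>*(g1-g0) - (g2-g1) + \<i>*(g3-g2)) / ?K)
        = (complex_of_real cc * ((g0-g3) - (g1-g0) + (g2-g1) - (g3-g2)) / ?K)^2" .
  qed
qed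

lemma H1_0: "H1 0 = 1/4"
proof -
  have "exp (\<i> * complex_of_real (pi/2)) = \<i>" unfolding exp_it by (simp add: complex_eq_iff)
  then have A: "Arg2pi \<i> = pi/2" using Arg2pi_unique[of 1 "pi/2" \<i>] by simp
  have R: "Rf 0 = \<i>" by (simp add: Rf_def)
  show ?thesis unfolding H1_def R A by simp
qed

lemma sum_one:
  assumes z: "cmod z < 1"
  shows "hE z + hN z + hW z + hS z = 1"
proof -
  have "\<exists>c. \<forall>x\<in>ball 0 1. MEd x + MNd x + MWd x + MSd x = c"
    by (rule has_field_derivative_zero_constant[OF convex_ball]) (use derivs(4) in \<open>auto intro: has_field_derivative_at_within\<close>)
  then obtain C where C: "\<forall>x\<in>ball 0 1. MEd x + MNd x + MWd x + MSd x = C" by blast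
  have s: "hE x + hN x + hW x + hS x = Re (2 * C) + 3" if "cmod x < 1" for x
  proof -
    have "hE x + hN x + hW x + hS x = Re (2 * (MEd x + MNd x + MWd x + MSd x)) + 3"
      using hk_real[OF that] by simp
    then show ?thesis using C that by simp
  qed
  have "hE 0 + hN 0 + hW 0 + hS 0 = 1" unfolding h_H1 by (simp add: H1_0)
  then show ?thesis using s[of 0] s[OF z] by simp
qed

lemma bd0:
  assumes w1: "cmod w = 1" and lt: "Re w + Im w < 1"
  shows "isCont H1 w" "H1 w = 0"
proof -
  obtain x y where w: "w = Complex x y" by (cases w)
  have xy: "x^2 + y^2 = 1" using w1 unfolding w cmod_def by simp
  have xl: "x < 1"
  proof -
    have "x^2 \<le> 1^2" using xy by (simp add: add_nonneg_eq_0_iff) (smt (verit) zero_le_power2)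
    then have "x \<le> 1" by (rule power2_le_imp_le) simp
    moreover have "x \<noteq> 1" using xy lt w by auto
    ultimately show ?thesis by simp
  qed
  define \<rho> where "\<rho> = (1 - x - y) / (2 - 2*x)"
  have rp: "\<rho> > 0" unfolding \<rho>_def using lt w xl by simp
  have w1': "w \<noteq> 1" using xl w by (auto simp: complex_eq_iff)
  have Rw: "Rf w = of_real \<rho> * (1 + \<i>)"
  proof -
    have "\<i> - w = of_real \<rho> * (1 + \<i>) * (1 - w)"
    proof -
      have a: "(1 - x - y) * (1 - x + y) = - x * (2 - 2*x)" using xy by (simp add: algebra_simps power2_eq_square)
      have b: "(1 - x - y) * (1 - x - y) = (1 - y) * (2 - 2*x)" using xy by (simp add: algebra_simps power2_eq_square)
      have d: "2 - 2*x \<noteq> 0" using xl by simp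
      show ?thesis unfolding w \<rho>_def using a b d
        by (simp add: complex_eq_iff field_simps)
    qed
    then show ?thesis unfolding Rf_def using w1' by (simp add: field_simps)
  qed
  have Rarg: "Arg2pi (Rf w) = pi/4"
  proof (rule Arg2pi_unique)
    show "complex_of_real (\<rho> * sqrt 2) * exp (\<i> * complex_of_real (pi / 4)) = Rf w"
      unfolding exps(2) Rw P0_def cc_def by (simp add: complex_eq_iff)
  qed (use rp in auto)
  show "H1 w = 0" unfolding H1_def Rarg by simp
  have nr: "Rf w \<notin> \<real>\<^sub>\<ge>\<^sub>0"
  proof
    assume "Rf w \<in> \<real>\<^sub>\<ge>\<^sub>0"
    then have "Im (Rf w) = 0" by (auto simp: complex_nonneg_Reals_iff)
    with rp show False unfolding Rw by simp
  qed
  have c1: "isCont Rf w" unfolding Rf_def[abs_def] using w1' by (intro continuous_intros) auto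
  have c2: "isCont Arg2pi (Rf w)" by (rule continuous_at_Arg2pi[OF nr])
  have "isCont (\<lambda>w. Arg2pi (Rf w)) w" using continuous_at_compose[OF c1 c2] by (simp add: o_def)
  then show "isCont H1 w" unfolding H1_def[abs_def] by (intro continuous_intros) auto
qed

lemma h_lim0:
  assumes f: "(f \<longlongrightarrow> w) F" and w1: "cmod w = 1"
  shows "2*cc*Re w < 1 \<Longrightarrow> ((\<lambda>x. hE (f x)) \<longlongrightarrow> 0) F"
    and "2*cc*Im w < 1 \<Longrightarrow> ((\<lambda>x. hN (f x)) \<longlongrightarrow> 0) F"
    and "-2*cc*Re w < 1 \<Longrightarrow> ((\<lambda>x. hW (f x)) \<longlongrightarrow> 0) F"
    and "-2*cc*Im w < 1 \<Longrightarrow> ((\<lambda>x. hS (f x)) \<longlongrightarrow> 0) F"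
proof -
  have gen: "((\<lambda>x. H1 (f x * Q)) \<longlongrightarrow> 0) F" if "cmod Q = 1" "Re (w*Q) + Im (w*Q) < 1" for Q
  proof -
    have n: "cmod (w * Q) = 1" using that w1 by (simp add: norm_mult)
    have "((\<lambda>x. f x * Q) \<longlongrightarrow> w * Q) F" by (intro tendsto_intros f)
    from isCont_tendsto_compose[OF bd0(1)[OF n that(2)] this] show ?thesis
      using bd0(2)[OF n that(2)] by simp
  qed
  show "2*cc*Re w < 1 \<Longrightarrow> ((\<lambda>x. hE (f x)) \<longlongrightarrow> 0) F"
    unfolding h_H1 by (rule gen[OF cmod_P(1)]) (simp add: P0_def algebra_simps)
  show "2*cc*Im w < 1 \<Longrightarrow> ((\<lambda>x. hN (f x)) \<longlongrightarrow> 0) F"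
    unfolding h_H1 by (rule gen[OF cmod_P(4)]) (simp add: P3_def algebra_simps)
  show "-2*cc*Re w < 1 \<Longrightarrow> ((\<lambda>x. hW (f x)) \<longlongrightarrow> 0) F"
    unfolding h_H1 by (rule gen[OF cmod_P(3)]) (simp add: P2_def algebra_simps)
  show "-2*cc*Im w < 1 \<Longrightarrow> ((\<lambda>x. hS (f x)) \<longlongrightarrow> 0) F"
    unfolding h_H1 by (rule gen[OF cmod_P(2)]) (simp add: P1_def algebra_simps)
qed

definition Fv :: "complex \<Rightarrow> complex \<times> real" where "Fv z = (zD z, thetaD z)"

lemma Fv_rep: "Fv z = hE z *\<^sub>R vE + hN z *\<^sub>R vN + hW z *\<^sub>R vW + hS z *\<^sub>R vS"
proof -
  have a: "zD z = fst (hE z *\<^sub>R vE + hN z *\<^sub>R vN + hW z *\<^sub>R vW + hS z *\<^sub>R vS)"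
    unfolding zD_def vE_def vN_def vW_def vS_def by (simp add: scaleR_conv_of_real algebra_simps)
  have b: "thetaD z = snd (hE z *\<^sub>R vE + hN z *\<^sub>R vN + hW z *\<^sub>R vW + hS z *\<^sub>R vS)"
    unfolding thetaD_def vE_def vN_def vW_def vS_def by (simp add: field_simps)
  show ?thesis unfolding Fv_def a b by (rule prod.collapse)
qed

lemma cos_gt: assumes "\<bar>s\<bar> < pi/4" shows "cos s > cc"
proof -
  have "cos (pi/4) < cos \<bar>s\<bar>" using assms by (subst cos_mono_less_eq) auto
  then show ?thesis by (simp add: cos_45 cc_def)
qed

lemma arc_mem: "w \<in> arc a b \<Longrightarrow> \<exists>t. a < t \<and> t < b \<and> w = Complex (cos t) (sin t)"
  unfolding arc_def exp_it by auto

lemma cmod_cs: "cmod (Complex (cos t) (sin t)) = 1" by (simp add: cmod_def)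

lemma arcs:
  "w \<in> arc (-pi/4) (pi/4) \<Longrightarrow> cmod w = 1 \<and> Re w > cc"
  "w \<in> arc (pi/4) (3*pi/4) \<Longrightarrow> cmod w = 1 \<and> Im w > cc"
  "w \<in> arc (3*pi/4) (5*pi/4) \<Longrightarrow> cmod w = 1 \<and> Re w < -cc"
  "w \<in> arc (5*pi/4) (7*pi/4) \<Longrightarrow> cmod w = 1 \<and> Im w < -cc"
proof -
  assume "w \<in> arc (-pi/4) (pi/4)"
  then obtain t where t: "-pi/4 < t" "t < pi/4" "w = Complex (cos t) (sin t)" using arc_mem by blast
  have "cos t > cc" by (rule cos_gt, unfold abs_less_iff) (use t in simp)
  then show "cmod w = 1 \<and> Re w > cc" using t cmod_cs by simp
next
  assume "w \<in> arc (pi/4) (3*pi/4)"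
  then obtain t where t: "pi/4 < t" "t < 3*pi/4" "w = Complex (cos t) (sin t)" using arc_mem by blast
  have "cos (t - pi/2) > cc" by (rule cos_gt, unfold abs_less_iff) (use t in simp)
  then have "sin t > cc" by (simp add: cos_diff)
  then show "cmod w = 1 \<and> Im w > cc" using t cmod_cs by simp
next
  assume "w \<in> arc (3*pi/4) (5*pi/4)"
  then obtain t where t: "3*pi/4 < t" "t < 5*pi/4" "w = Complex (cos t) (sin t)" using arc_mem by blast
  have "cos (t - pi) > cc" by (rule cos_gt, unfold abs_less_iff) (use t in simp)
  then have "cos t < - cc" by (simp add: cos_diff)
  then show "cmod w = 1 \<and> Re w < -cc" using t cmod_cs by simp
next
  assume "w \<in> arc (5*pi/4) (7*pi/4)"
  then obtain t where t: "5*pi/4 < t" "t < 7*pi/4" "w = Complex (cos t) (sin t)" using arc_mem by blast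
  define s where "s = t - pi"
  have "cos (s - pi/2) > cc" unfolding s_def by (rule cos_gt, unfold abs_less_iff) (use t in simp)
  then have "sin s > cc" by (simp add: cos_diff)
  then have "sin t < - cc" unfolding s_def by simp
  then show "cmod w = 1 \<and> Im w < -cc" using t cmod_cs by simp
qed

lemma other_small:
  assumes "cmod w = 1" shows "\<bar>Re w\<bar> > cc \<Longrightarrow> \<bar>Im w\<bar> < cc" "\<bar>Im w\<bar> > cc \<Longrightarrow> \<bar>Re w\<bar> < cc"
proof -
  have s: "(Re w)^2 + (Im w)^2 = 1" using assms by (simp add: cmod_power2[symmetric])
  have c2: "cc^2 = 1/2" by (rule cc_sq2)
  show "\<bar>Re w\<bar> > cc \<Longrightarrow> \<bar>Im w\<bar> < cc"
  proof -
    assume "\<bar>Re w\<bar> > cc"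
    then have "cc^2 < \<bar>Re w\<bar>^2" using cc_pos by (intro power_strict_mono) auto
    then have "\<bar>Im w\<bar>^2 < cc^2" using s c2 by simp
    then show "\<bar>Im w\<bar> < cc" by (rule power_less_imp_less_base) (use cc_pos in auto)
  qed
  show "\<bar>Im w\<bar> > cc \<Longrightarrow> \<bar>Re w\<bar> < cc"
  proof -
    assume "\<bar>Im w\<bar> > cc"
    then have "cc^2 < \<bar>Im w\<bar>^2" using cc_pos by (intro power_strict_mono) auto
    then have "\<bar>Re w\<bar>^2 < cc^2" using s c2 by simp
    then show "\<bar>Re w\<bar> < cc" by (rule power_less_imp_less_base) (use cc_pos in auto)
  qed
qed

lemma lim4:
  fixes va vb vc vd :: "complex \<times> real"
  assumes ev: "eventually (\<lambda>x. a x + b x + c x + d x = 1) F"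
    and b: "(b \<longlongrightarrow> 0) F" and c: "(c \<longlongrightarrow> 0) F" and d: "(d \<longlongrightarrow> 0) F"
  shows "((\<lambda>x. a x *\<^sub>R va + b x *\<^sub>R vb + c x *\<^sub>R vc + d x *\<^sub>R vd) \<longlongrightarrow> va) F"
proof -
  have "((\<lambda>x. 1 - b x - c x - d x) \<longlongrightarrow> 1 - 0 - 0 - 0) F" by (intro tendsto_intros b c d)
  moreover have e: "eventually (\<lambda>x. 1 - b x - c x - d x = a x) F"
    using ev by (rule eventually_mono) simp
  ultimately have a: "(a \<longlongrightarrow> 1) F" using tendsto_cong[OF e] by simp
  have "((\<lambda>x. a x *\<^sub>R va + b x *\<^sub>R vb + c x *\<^sub>R vc + d x *\<^sub>R vd) \<longlongrightarrow> 1 *\<^sub>R va + 0 *\<^sub>R vb + 0 *\<^sub>R vc + 0 *\<^sub>R vd) F"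
    by (intro tendsto_intros a b c d)
  then show ?thesis by simp
qed

lemma ev_ball: "eventually (\<lambda>x. cmod x < 1) (at w within ball 0 1)"
  by (auto simp: eventually_at_filter)

lemma ev_sum: "eventually (\<lambda>x. hE x + hN x + hW x + hS x = 1) (at w within ball 0 1)"
  using ev_ball by (rule eventually_mono) (rule sum_one)

lemma cc_ineq: "\<bar>r\<bar> < cc \<Longrightarrow> 2*cc*r < 1" "\<bar>r\<bar> < cc \<Longrightarrow> -2*cc*r < 1" "r \<ge> 0 \<Longrightarrow> -2*cc*r < 1"
  "r \<le> 0 \<Longrightarrow> 2*cc*r < 1"
proof -
  have c2: "2*cc*cc = 1" using cc_sq by simp
  have m1: "cc * r \<le> cc * \<bar>r\<bar>" using cc_pos by (intro mult_left_mono) auto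
  have m2: "- (cc * r) \<le> cc * \<bar>r\<bar>" using cc_pos by (simp add: mult_left_mono[of "-r" "\<bar>r\<bar>" cc, simplified])
  have m3: "\<bar>r\<bar> < cc \<Longrightarrow> cc * \<bar>r\<bar> < cc * cc" using cc_pos by (intro mult_strict_left_mono) auto
  show "\<bar>r\<bar> < cc \<Longrightarrow> 2*cc*r < 1" using m1 m3 c2 by linarith
  show "\<bar>r\<bar> < cc \<Longrightarrow> -2*cc*r < 1" using m2 m3 c2 by linarith
  show "r \<ge> 0 \<Longrightarrow> -2*cc*r < 1" using cc_pos mult_nonneg_nonneg[of cc r] by linarith
  show "r \<le> 0 \<Longrightarrow> 2*cc*r < 1" using cc_pos mult_nonneg_nonpos[of cc r] by linarith
qed

lemma arc_limits:
  "w \<in> arc (-pi/4) (pi/4) \<Longrightarrow> (Fv \<longlongrightarrow> vE) (at w within ball 0 1)"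
  "w \<in> arc (pi/4) (3*pi/4) \<Longrightarrow> (Fv \<longlongrightarrow> vN) (at w within ball 0 1)"
  "w \<in> arc (3*pi/4) (5*pi/4) \<Longrightarrow> (Fv \<longlongrightarrow> vW) (at w within ball 0 1)"
  "w \<in> arc (5*pi/4) (7*pi/4) \<Longrightarrow> (Fv \<longlongrightarrow> vS) (at w within ball 0 1)"
proof -
  have id: "((\<lambda>x. x) \<longlongrightarrow> w) (at w within ball 0 1)" by (rule tendsto_ident_at)
  note L = h_lim0[OF id]
  have F: "Fv = (\<lambda>x. hE x *\<^sub>R vE + hN x *\<^sub>R vN + hW x *\<^sub>R vW + hS x *\<^sub>R vS)"
    by (rule ext) (rule Fv_rep)
  {
    assume "w \<in> arc (-pi/4) (pi/4)"
    note a = arcs(1)[OF this]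
    have s: "\<bar>Im w\<bar> < cc" using other_small(1)[of w] a cc_pos by auto
    have n1: "2*cc*Im w < 1" by (rule cc_ineq(1)[OF s])
    have n2: "-2*cc*Re w < 1" by (rule cc_ineq(3)) (use a cc_pos in linarith)
    have n3: "-2*cc*Im w < 1" by (rule cc_ineq(2)[OF s])
    have "((\<lambda>x. hE x *\<^sub>R vE + hN x *\<^sub>R vN + hW x *\<^sub>R vW + hS x *\<^sub>R vS) \<longlongrightarrow> vE) (at w within ball 0 1)"
      by (rule lim4[OF ev_sum L(2)[OF conjunct1[OF a] n1] L(3)[OF conjunct1[OF a] n2] L(4)[OF conjunct1[OF a] n3]])
    then show "(Fv \<longlongrightarrow> vE) (at w within ball 0 1)" unfolding F .
  next
    assume "w \<in> arc (pi/4) (3*pi/4)"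
    note a = arcs(2)[OF this]
    have s: "\<bar>Re w\<bar> < cc" using other_small(2)[of w] a cc_pos by auto
    have ev: "eventually (\<lambda>x. hN x + hE x + hW x + hS x = 1) (at w within ball 0 1)"
      using ev_sum by (rule eventually_mono) simp
    have n1: "2*cc*Re w < 1" by (rule cc_ineq(1)[OF s])
    have n2: "-2*cc*Re w < 1" by (rule cc_ineq(2)[OF s])
    have n3: "-2*cc*Im w < 1" by (rule cc_ineq(3)) (use a cc_pos in linarith)
    have "((\<lambda>x. hN x *\<^sub>R vN + hE x *\<^sub>R vE + hW x *\<^sub>R vW + hS x *\<^sub>R vS) \<longlongrightarrow> vN) (at w within ball 0 1)"
      by (rule lim4[OF ev L(1)[OF conjunct1[OF a] n1] L(3)[OF conjunct1[OF a] n2] L(4)[OF conjunct1[OF a] n3]])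
    then show "(Fv \<longlongrightarrow> vN) (at w within ball 0 1)" unfolding F by (simp add: add_ac)
  next
    assume "w \<in> arc (3*pi/4) (5*pi/4)"
    note a = arcs(3)[OF this]
    have s: "\<bar>Im w\<bar> < cc" using other_small(1)[of w] a cc_pos by auto
    have ev: "eventually (\<lambda>x. hW x + hE x + hN x + hS x = 1) (at w within ball 0 1)"
      using ev_sum by (rule eventually_mono) simp
    have n1: "2*cc*Re w < 1" by (rule cc_ineq(4)) (use a cc_pos in linarith)
    have n2: "2*cc*Im w < 1" by (rule cc_ineq(1)[OF s])
    have n3: "-2*cc*Im w < 1" by (rule cc_ineq(2)[OF s])
    have "((\<lambda>x. hW x *\<^sub>R vW + hE x *\<^sub>R vE + hN x *\<^sub>R vN + hS x *\<^sub>R vS) \<longlongrightarrow> vW) (at w within ball 0 1)"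
      by (rule lim4[OF ev L(1)[OF conjunct1[OF a] n1] L(2)[OF conjunct1[OF a] n2] L(4)[OF conjunct1[OF a] n3]])
    then show "(Fv \<longlongrightarrow> vW) (at w within ball 0 1)" unfolding F by (simp add: add_ac)
  next
    assume "w \<in> arc (5*pi/4) (7*pi/4)"
    note a = arcs(4)[OF this]
    have s: "\<bar>Re w\<bar> < cc" using other_small(2)[of w] a cc_pos by auto
    have ev: "eventually (\<lambda>x. hS x + hE x + hN x + hW x = 1) (at w within ball 0 1)"
      using ev_sum by (rule eventually_mono) simp
    have n1: "2*cc*Re w < 1" by (rule cc_ineq(1)[OF s])
    have n2: "2*cc*Im w < 1" by (rule cc_ineq(4)) (use a cc_pos in linarith)
    have n3: "-2*cc*Re w < 1" by (rule cc_ineq(2)[OF s])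
    have "((\<lambda>x. hS x *\<^sub>R vS + hE x *\<^sub>R vE + hN x *\<^sub>R vN + hW x *\<^sub>R vW) \<longlongrightarrow> vS) (at w within ball 0 1)"
      by (rule lim4[OF ev L(1)[OF conjunct1[OF a] n1] L(2)[OF conjunct1[OF a] n2] L(3)[OF conjunct1[OF a] n3]])
    then show "(Fv \<longlongrightarrow> vS) (at w within ball 0 1)" unfolding F by (simp add: add_ac)
  }
qed

lemma h_nonneg:
  assumes "cmod z < 1" shows "hE z \<ge> 0" "hN z \<ge> 0" "hW z \<ge> 0" "hS z \<ge> 0"
proof -
  have "\<And>Q. cmod Q = 1 \<Longrightarrow> H1 (z * Q) \<ge> 0"
    using H1_bounds(1) assms by (simp add: norm_mult less_imp_le)
  then show "hE z \<ge> 0" "hN z \<ge> 0" "hW z \<ge> 0" "hS z \<ge> 0"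
    unfolding h_H1 using cmod_P by auto
qed

lemma corner:
  fixes a b c d :: "nat \<Rightarrow> real" and va vb vc vd :: "complex \<times> real"
  assumes nn: "\<And>n. a n \<ge> 0" "\<And>n. b n \<ge> 0" "\<And>n. c n \<ge> 0" "\<And>n. d n \<ge> 0"
    and sum: "\<And>n. a n + b n + c n + d n = 1"
    and c: "c \<longlonglongrightarrow> 0" and d: "d \<longlonglongrightarrow> 0"
    and p: "(\<lambda>n. a n *\<^sub>R va + b n *\<^sub>R vb + c n *\<^sub>R vc + d n *\<^sub>R vd) \<longlonglongrightarrow> p"
  shows "p \<in> closed_segment vb va"
proof -
  have "\<forall>n. a n \<in> {0..1}"
  proof
    fix n show "a n \<in> {0..1}" using nn[of n] sum[of n] by auto
  qed
  then obtain l r where l: "l \<in> {0..1}" and r: "strict_mono r" and ar: "(a \<circ> r) \<longlonglongrightarrow> l"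
    using seq_compactE[OF compact_imp_seq_compact[OF compact_Icc]] by metis
  have cr: "(c \<circ> r) \<longlonglongrightarrow> 0" by (rule LIMSEQ_subseq_LIMSEQ[OF c r])
  have dr: "(d \<circ> r) \<longlonglongrightarrow> 0" by (rule LIMSEQ_subseq_LIMSEQ[OF d r])
  have br: "(\<lambda>n. 1 - (a \<circ> r) n - (c \<circ> r) n - (d \<circ> r) n) \<longlonglongrightarrow> 1 - l - 0 - 0"
    by (intro tendsto_intros ar cr dr)
  have "(\<lambda>n. (a \<circ> r) n *\<^sub>R va + (1 - (a \<circ> r) n - (c \<circ> r) n - (d \<circ> r) n) *\<^sub>R vb + (c \<circ> r) n *\<^sub>R vc + (d \<circ> r) n *\<^sub>R vd)
      \<longlonglongrightarrow> l *\<^sub>R va + (1 - l - 0 - 0) *\<^sub>R vb + 0 *\<^sub>R vc + 0 *\<^sub>R vd"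
    by (intro tendsto_intros ar cr dr br)
  moreover have "(\<lambda>n. (a \<circ> r) n *\<^sub>R va + (1 - (a \<circ> r) n - (c \<circ> r) n - (d \<circ> r) n) *\<^sub>R vb + (c \<circ> r) n *\<^sub>R vc + (d \<circ> r) n *\<^sub>R vd)
      = (\<lambda>n. a n *\<^sub>R va + b n *\<^sub>R vb + c n *\<^sub>R vc + d n *\<^sub>R vd) \<circ> r"
  proof
    fix n
    have "b (r n) = 1 - a (r n) - c (r n) - d (r n)" using sum[of "r n"] by linarith
    then show "(a \<circ> r) n *\<^sub>R va + (1 - (a \<circ> r) n - (c \<circ> r) n - (d \<circ> r) n) *\<^sub>R vb + (c \<circ> r) n *\<^sub>R vc + (d \<circ> r) n *\<^sub>R vd
      = ((\<lambda>n. a n *\<^sub>R va + b n *\<^sub>R vb + c n *\<^sub>R vc + d n *\<^sub>R vd) \<circ> r) n" by simp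
  qed
  moreover have "((\<lambda>n. a n *\<^sub>R va + b n *\<^sub>R vb + c n *\<^sub>R vc + d n *\<^sub>R vd) \<circ> r) \<longlonglongrightarrow> p"
    by (rule LIMSEQ_subseq_LIMSEQ[OF p r])
  ultimately have "p = l *\<^sub>R va + (1 - l) *\<^sub>R vb" using LIMSEQ_unique by fastforce
  then show ?thesis unfolding in_segment(1) using l by auto
qed

lemma Fv_perm:
  "Fv z = hE z *\<^sub>R vE + hN z *\<^sub>R vN + hW z *\<^sub>R vW + hS z *\<^sub>R vS"
  "Fv z = hN z *\<^sub>R vN + hW z *\<^sub>R vW + hE z *\<^sub>R vE + hS z *\<^sub>R vS"
  "Fv z = hW z *\<^sub>R vW + hS z *\<^sub>R vS + hE z *\<^sub>R vE + hN z *\<^sub>R vN"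
  "Fv z = hS z *\<^sub>R vS + hE z *\<^sub>R vE + hN z *\<^sub>R vN + hW z *\<^sub>R vW"
  unfolding Fv_rep by (simp_all add: add_ac)

lemma cluster_sub:
  assumes "p \<in> boundary_cluster_set (\<lambda>\<zeta>. (zD \<zeta>, thetaD \<zeta>))"
  shows "p \<in> C_diamond"
proof -
  obtain s where s: "\<And>n. s n \<in> ball 0 1" and sn: "(\<lambda>n. cmod (s n)) \<longlonglongrightarrow> 1"
    and sp: "(\<lambda>n. Fv (s n)) \<longlonglongrightarrow> p"
    using assms unfolding boundary_cluster_set_def Fv_def by blast
  have "\<forall>n. s n \<in> cball 0 1" using s by (meson less_imp_le mem_ball_0 mem_cball_0)
  then obtain l r where r: "strict_mono r" and sl: "(s \<circ> r) \<longlonglongrightarrow> l"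
    using seq_compactE[OF compact_imp_seq_compact[OF compact_cball]] by metis
  define x where "x = s \<circ> r"
  have xl: "x \<longlonglongrightarrow> l" unfolding x_def by (rule sl)
  have x1: "cmod (x n) < 1" for n unfolding x_def using s by simp
  have xp: "(\<lambda>n. Fv (x n)) \<longlonglongrightarrow> p" unfolding x_def using LIMSEQ_subseq_LIMSEQ[OF sp r] by (simp add: o_def)
  have "(\<lambda>n. cmod (x n)) \<longlonglongrightarrow> cmod l" by (intro tendsto_intros xl)
  moreover have "(\<lambda>n. cmod (x n)) \<longlonglongrightarrow> 1" unfolding x_def using LIMSEQ_subseq_LIMSEQ[OF sn r] by (simp add: o_def)
  ultimately have l1: "cmod l = 1" using LIMSEQ_unique by blast
  note L = h_lim0[OF xl l1]
  note nn = h_nonneg[OF x1]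
  note su = sum_one[OF x1]
  consider "Re l \<ge> 0" "Im l \<ge> 0" | "Re l \<le> 0" "Im l \<ge> 0" | "Re l \<le> 0" "Im l \<le> 0" | "Re l \<ge> 0" "Im l \<le> 0"
    by linarith
  then show ?thesis
  proof cases
    case 1
    have "p \<in> closed_segment vN vE"
      by (rule corner[OF nn(1) nn(2) nn(3) nn(4) su L(3)[OF cc_ineq(3)[OF 1(1)]] L(4)[OF cc_ineq(3)[OF 1(2)]]])
         (use xp in \<open>simp add: Fv_perm(1)\<close>)
    then show ?thesis unfolding C_diamond_def by (auto simp: closed_segment_commute)
  next
    case 2
    have "p \<in> closed_segment vW vN"
      by (rule corner[OF nn(2) nn(3) nn(1) nn(4), where va=vN and vb=vW and vc=vE and vd=vS]) (use su L(1)[OF cc_ineq(4)[OF 2(1)]] L(4)[OF cc_ineq(3)[OF 2(2)]] xp in \<open>simp_all add: Fv_perm(2) add_ac\<close>)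
    then show ?thesis unfolding C_diamond_def by (auto simp: closed_segment_commute)
  next
    case 3
    have "p \<in> closed_segment vS vW"
      by (rule corner[OF nn(3) nn(4) nn(1) nn(2), where va=vW and vb=vS and vc=vE and vd=vN]) (use su L(1)[OF cc_ineq(4)[OF 3(1)]] L(2)[OF cc_ineq(4)[OF 3(2)]] xp in \<open>simp_all add: Fv_perm(3) add_ac\<close>)
    then show ?thesis unfolding C_diamond_def by (auto simp: closed_segment_commute)
  next
    case 4
    have "p \<in> closed_segment vE vS"
      by (rule corner[OF nn(4) nn(1) nn(2) nn(3), where va=vS and vb=vE and vc=vN and vd=vW]) (use su L(2)[OF cc_ineq(4)[OF 4(2)]] L(3)[OF cc_ineq(3)[OF 4(1)]] xp in \<open>simp_all add: Fv_perm(4) add_ac\<close>)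
    then show ?thesis unfolding C_diamond_def by (auto simp: closed_segment_commute)
  qed
qed

lemma in_cluster:
  assumes "\<And>n. cmod (s n) < 1" "(\<lambda>n. cmod (s n)) \<longlonglongrightarrow> 1" "(\<lambda>n. Fv (s n)) \<longlonglongrightarrow> p"
  shows "p \<in> boundary_cluster_set (\<lambda>\<zeta>. (zD \<zeta>, thetaD \<zeta>))"
  unfolding boundary_cluster_set_def using assms unfolding Fv_def by auto

lemma vertex:
  assumes w1: "cmod w = 1" and lim: "(Fv \<longlongrightarrow> v) (at w within ball 0 1)"
  shows "v \<in> boundary_cluster_set (\<lambda>\<zeta>. (zD \<zeta>, thetaD \<zeta>))"
proof -
  define t where "t n = 1 - inverse (real (Suc (Suc n)))" for n
  define x where "x n = complex_of_real (t n) * w" for n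
  have t01: "0 < t n" "t n < 1" for n unfolding t_def by (auto simp: field_simps)
  have tl: "t \<longlonglongrightarrow> 1"
  proof -
    have "(\<lambda>n. inverse (real (Suc (Suc n)))) \<longlonglongrightarrow> 0"
      using LIMSEQ_Suc[OF LIMSEQ_inverse_real_of_nat] by simp
    then have "(\<lambda>n. 1 - inverse (real (Suc (Suc n)))) \<longlonglongrightarrow> 1 - 0" by (intro tendsto_intros)
    then show ?thesis unfolding t_def[abs_def] by simp
  qed
  have xn: "cmod (x n) = t n" for n unfolding x_def using w1 t01[of n] by (simp add: norm_mult)
  have xw: "x \<longlonglongrightarrow> w"
  proof -
    have "(\<lambda>n. complex_of_real (t n) * w) \<longlonglongrightarrow> complex_of_real 1 * w" by (intro tendsto_intros tl)
    then show ?thesis unfolding x_def[abs_def] by simp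
  qed
  have fl: "filterlim x (at w within ball 0 1) sequentially"
    unfolding filterlim_at
  proof
    show "\<forall>\<^sub>F n in sequentially. x n \<in> ball 0 1 \<and> x n \<noteq> w"
    proof (intro always_eventually allI conjI)
      fix n show "x n \<in> ball 0 1" using xn t01 by simp
      show "x n \<noteq> w" using xn[of n] t01[of n] w1 by auto
    qed
  qed (rule xw)
  have "(\<lambda>n. Fv (x n)) \<longlonglongrightarrow> v" by (rule filterlim_compose[OF lim fl])
  moreover have "(\<lambda>n. cmod (x n)) \<longlonglongrightarrow> 1" unfolding xn by (rule tl)
  ultimately show ?thesis using in_cluster[of x] xn t01 by auto
qed

lemma exp_vals: "exp (\<i> * complex_of_real 0) = 1" "exp (\<i> * complex_of_real (pi/2)) = \<i>"
  "exp (\<i> * complex_of_real pi) = -1" "exp (\<i> * complex_of_real (pi + pi/2)) = -\<i>"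
proof -
  show a: "exp (\<i> * complex_of_real 0) = 1" by simp
  show b: "exp (\<i> * complex_of_real (pi/2)) = \<i>" unfolding exp_it by (simp add: complex_eq_iff)
  show c: "exp (\<i> * complex_of_real pi) = -1" unfolding exp_it by (simp add: complex_eq_iff)
  show "exp (\<i> * complex_of_real (pi + pi/2)) = -\<i>" unfolding exp_i_add b c by simp
qed

lemma vertices_in:
  "vE \<in> boundary_cluster_set (\<lambda>\<zeta>. (zD \<zeta>, thetaD \<zeta>))"
  "vN \<in> boundary_cluster_set (\<lambda>\<zeta>. (zD \<zeta>, thetaD \<zeta>))"
  "vW \<in> boundary_cluster_set (\<lambda>\<zeta>. (zD \<zeta>, thetaD \<zeta>))"
  "vS \<in> boundary_cluster_set (\<lambda>\<zeta>. (zD \<zeta>, thetaD \<zeta>))"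
proof -
  have "1 \<in> arc (-pi/4) (pi/4)" unfolding arc_def
  proof -
    have "1 = exp (\<i> * complex_of_real 0) \<and> -pi/4 < 0 \<and> (0::real) < pi/4"
      using exp_vals(1) pi_gt_zero by simp
    then show "1 \<in> {exp (\<i> * complex_of_real t) |t. - pi / 4 < t \<and> t < pi / 4}" by blast
  qed
  from vertex[OF _ arc_limits(1)[OF this]] show "vE \<in> boundary_cluster_set (\<lambda>\<zeta>. (zD \<zeta>, thetaD \<zeta>))" by simp
  have "\<i> \<in> arc (pi/4) (3*pi/4)"
  proof -
    have "\<i> = exp (\<i> * complex_of_real (pi/2)) \<and> pi/4 < pi/2 \<and> pi/2 < 3*pi/4"
      using exp_vals(2) pi_gt_zero by simp
    then show ?thesis unfolding arc_def by blast
  qed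
  from vertex[OF _ arc_limits(2)[OF this]] show "vN \<in> boundary_cluster_set (\<lambda>\<zeta>. (zD \<zeta>, thetaD \<zeta>))" by simp
  have "-1 \<in> arc (3*pi/4) (5*pi/4)"
  proof -
    have "-1 = exp (\<i> * complex_of_real pi) \<and> 3*pi/4 < pi \<and> pi < 5*pi/4"
      using exp_vals(3) pi_gt_zero by simp
    then show ?thesis unfolding arc_def by blast
  qed
  from vertex[OF _ arc_limits(3)[OF this]] show "vW \<in> boundary_cluster_set (\<lambda>\<zeta>. (zD \<zeta>, thetaD \<zeta>))" by simp
  have "-\<i> \<in> arc (5*pi/4) (7*pi/4)"
  proof -
    have "-\<i> = exp (\<i> * complex_of_real (pi + pi/2)) \<and> 5*pi/4 < pi + pi/2 \<and> pi + pi/2 < 7*pi/4"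
      using exp_vals(4) pi_gt_zero by simp
    then show ?thesis unfolding arc_def by blast
  qed
  from vertex[OF _ arc_limits(4)[OF this]] show "vS \<in> boundary_cluster_set (\<lambda>\<zeta>. (zD \<zeta>, thetaD \<zeta>))" by simp
qed

lemma approach_i:
  assumes ph: "pi/4 < \<phi>" "\<phi> < 5*pi/4"
  obtains \<omega> where "\<And>n. cmod (\<omega> n) < 1" "\<omega> \<longlonglongrightarrow> \<i>" "(\<lambda>n. H1 (\<omega> n)) \<longlonglongrightarrow> \<phi>/pi - 1/4"
proof -
  define d where "d = (1 - \<i>) * exp (\<i> * complex_of_real \<phi>)"
  define \<delta> where "\<delta> = sin \<phi> - cos \<phi>"
  have dC: "d = Complex (cos \<phi> + sin \<phi>) \<delta>" unfolding d_def \<delta>_def exp_it by (simp add: complex_eq_iff)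
  have \<delta>p: "\<delta> > 0"
  proof -
    have "sin (\<phi> - pi/4) > 0" by (rule sin_gt_zero) (use ph in auto)
    then show ?thesis unfolding \<delta>_def sin_diff cos_45 sin_45
      by (simp add: algebra_simps)
  qed
  define r where "r n = \<delta> * inverse (real (Suc (Suc n)))" for n
  have r0: "0 < r n" "r n < \<delta>" for n
    unfolding r_def using \<delta>p by (auto simp: field_simps add_pos_nonneg)
  have rl: "r \<longlonglongrightarrow> 0"
  proof -
    have "(\<lambda>n. inverse (real (Suc (Suc n)))) \<longlonglongrightarrow> 0"
      using LIMSEQ_Suc[OF LIMSEQ_inverse_real_of_nat] by simp
    then have "(\<lambda>n. \<delta> * inverse (real (Suc (Suc n)))) \<longlonglongrightarrow> \<delta> * 0" by (intro tendsto_intros)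
    then show ?thesis unfolding r_def[abs_def] by simp
  qed
  define \<omega> where "\<omega> n = \<i> - complex_of_real (r n) * d" for n
  have cs: "(cos \<phi> + sin \<phi>)^2 + \<delta>^2 = 2" unfolding \<delta>_def
    using sin_cos_squared_add[of \<phi>] by (simp add: power2_eq_square algebra_simps)
  have n1: "cmod (\<omega> n) < 1" for n
  proof -
    have "(cmod (\<omega> n))^2 = (r n)^2 * ((cos \<phi> + sin \<phi>)^2 + \<delta>^2) - 2 * r n * \<delta> + 1"
      unfolding \<omega>_def dC cmod_power2 by (simp add: power2_eq_square algebra_simps)
    also have "... = 1 - 2 * r n * (\<delta> - r n)" unfolding cs by (simp add: power2_eq_square algebra_simps)
    also have "... < 1" using r0[of n] by simp
    finally have "(cmod (\<omega> n))^2 < 1^2" by simp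
    then show ?thesis by (rule power_less_imp_less_base) simp
  qed
  have ol: "\<omega> \<longlonglongrightarrow> \<i>"
  proof -
    have "(\<lambda>n. \<i> - complex_of_real (r n) * d) \<longlonglongrightarrow> \<i> - complex_of_real 0 * d" by (intro tendsto_intros rl)
    then show ?thesis unfolding \<omega>_def[abs_def] by simp
  qed
  have Rw: "Arg2pi (Rf (\<omega> n)) = Arg2pi (d / (1 - \<i> + complex_of_real (r n) * d))" for n
  proof -
    have "Rf (\<omega> n) = complex_of_real (r n) * (d / (1 - \<i> + complex_of_real (r n) * d))"
      unfolding Rf_def \<omega>_def by (simp add: algebra_simps)
    then show ?thesis using r0[of n] Arg2pi_times_of_real[of "r n" "d / (1 - \<i> + complex_of_real (r n) * d)"] by (simp only:)
  qed
  have e: "d / (1 - \<i>) = exp (\<i> * complex_of_real \<phi>)" unfolding d_def by simp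
  have tl: "(\<lambda>n. d / (1 - \<i> + complex_of_real (r n) * d)) \<longlonglongrightarrow> d / (1 - \<i> + complex_of_real 0 * d)"
    by (intro tendsto_intros rl) simp
  then have tl': "(\<lambda>n. d / (1 - \<i> + complex_of_real (r n) * d)) \<longlonglongrightarrow> exp (\<i> * complex_of_real \<phi>)"
    using e by simp
  have A: "Arg2pi (exp (\<i> * complex_of_real \<phi>)) = \<phi>"
    using Arg2pi_exp[of "\<i> * complex_of_real \<phi>"] ph pi_gt_zero by simp
  have nr: "exp (\<i> * complex_of_real \<phi>) \<notin> \<real>\<^sub>\<ge>\<^sub>0"
  proof
    assume "exp (\<i> * complex_of_real \<phi>) \<in> \<real>\<^sub>\<ge>\<^sub>0"
    then have "Arg2pi (exp (\<i> * complex_of_real \<phi>)) = 0"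
      by (auto simp: Arg2pi_eq_0 complex_nonneg_Reals_iff complex_is_Real_iff)
    with A ph pi_gt_zero show False by simp
  qed
  have "(\<lambda>n. Arg2pi (d / (1 - \<i> + complex_of_real (r n) * d))) \<longlonglongrightarrow> \<phi>"
    using isCont_tendsto_compose[OF continuous_at_Arg2pi[OF nr] tl'] A by simp
  then have "(\<lambda>n. Arg2pi (d / (1 - \<i> + complex_of_real (r n) * d)) / pi - 1/4) \<longlonglongrightarrow> \<phi>/pi - 1/4"
    by (intro tendsto_intros) auto
  then have "(\<lambda>n. H1 (\<omega> n)) \<longlonglongrightarrow> \<phi>/pi - 1/4" unfolding H1_def Rw .
  then show ?thesis using that n1 ol by blast
qed

abbreviation "CL \<equiv> boundary_cluster_set (\<lambda>\<zeta>. (zD \<zeta>, thetaD \<zeta>))"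

lemma seg_gen:
  fixes ha hb hc hd :: "complex \<Rightarrow> real" and va vb vc vd :: "complex \<times> real"
  assumes lam: "0 < lm" "lm < 1" and Qs: "cmod Qs = 1"
    and ha: "\<And>z. ha z = H1 (z * cnj Qs)"
    and Fr: "\<And>z. Fv z = ha z *\<^sub>R va + hb z *\<^sub>R vb + hc z *\<^sub>R vc + hd z *\<^sub>R vd"
    and su: "\<And>z. cmod z < 1 \<Longrightarrow> ha z + hb z + hc z + hd z = 1"
    and hc: "\<And>f. f \<longlonglongrightarrow> \<i> * Qs \<Longrightarrow> (\<lambda>n. hc (f n)) \<longlonglongrightarrow> 0"
    and hd: "\<And>f. f \<longlonglongrightarrow> \<i> * Qs \<Longrightarrow> (\<lambda>n. hd (f n)) \<longlonglongrightarrow> 0"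
  shows "lm *\<^sub>R va + (1 - lm) *\<^sub>R vb \<in> CL"
proof -
  define \<phi> where "\<phi> = pi * (lm + 1/4)"
  have ph: "pi/4 < \<phi>" "\<phi> < 5*pi/4" unfolding \<phi>_def using lam pi_gt_zero by (auto simp: algebra_simps)
  have pl: "\<phi>/pi - 1/4 = lm" unfolding \<phi>_def by simp
  obtain \<omega> where o1: "\<And>n. cmod (\<omega> n) < 1" and ol: "\<omega> \<longlonglongrightarrow> \<i>" and oh: "(\<lambda>n. H1 (\<omega> n)) \<longlonglongrightarrow> lm"
    using approach_i[OF ph] pl by metis
  define s where "s n = \<omega> n * Qs" for n
  have s1: "cmod (s n) < 1" for n unfolding s_def using o1[of n] Qs by (simp add: norm_mult)
  have sl: "s \<longlonglongrightarrow> \<i> * Qs" unfolding s_def[abs_def] by (intro tendsto_intros ol)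
  have sn: "(\<lambda>n. cmod (s n)) \<longlonglongrightarrow> 1"
  proof -
    have "(\<lambda>n. cmod (s n)) \<longlonglongrightarrow> cmod (\<i> * Qs)" by (intro tendsto_intros sl)
    then show ?thesis using Qs by (simp add: norm_mult)
  qed
  have QQ: "Qs * cnj Qs = 1" using Qs by (simp add: complex_norm_square[symmetric])
  have has: "ha (s n) = H1 (\<omega> n)" for n unfolding ha s_def using QQ by (simp add: mult.assoc)
  have a: "(\<lambda>n. ha (s n)) \<longlonglongrightarrow> lm" unfolding has by (rule oh)
  have c: "(\<lambda>n. hc (s n)) \<longlonglongrightarrow> 0" by (rule hc[OF sl])
  have d: "(\<lambda>n. hd (s n)) \<longlonglongrightarrow> 0" by (rule hd[OF sl])
  have b: "(\<lambda>n. 1 - ha (s n) - hc (s n) - hd (s n)) \<longlonglongrightarrow> 1 - lm - 0 - 0" by (intro tendsto_intros a c d)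
  have "(\<lambda>n. ha (s n) *\<^sub>R va + (1 - ha (s n) - hc (s n) - hd (s n)) *\<^sub>R vb + hc (s n) *\<^sub>R vc + hd (s n) *\<^sub>R vd)
     \<longlonglongrightarrow> lm *\<^sub>R va + (1 - lm - 0 - 0) *\<^sub>R vb + 0 *\<^sub>R vc + 0 *\<^sub>R vd"
    by (intro tendsto_intros a b c d)
  moreover have "(\<lambda>n. ha (s n) *\<^sub>R va + (1 - ha (s n) - hc (s n) - hd (s n)) *\<^sub>R vb + hc (s n) *\<^sub>R vc + hd (s n) *\<^sub>R vd)
     = (\<lambda>n. Fv (s n))"
  proof
    fix n
    have "hb (s n) = 1 - ha (s n) - hc (s n) - hd (s n)" using su[OF s1[of n]] by linarith
    then show "ha (s n) *\<^sub>R va + (1 - ha (s n) - hc (s n) - hd (s n)) *\<^sub>R vb + hc (s n) *\<^sub>R vc + hd (s n) *\<^sub>R vd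
      = Fv (s n)" unfolding Fr by simp
  qed
  ultimately have "(\<lambda>n. Fv (s n)) \<longlonglongrightarrow> lm *\<^sub>R va + (1 - lm) *\<^sub>R vb" by simp
  then show ?thesis by (rule in_cluster[OF s1 sn])
qed

lemma Pcoords: "Re P0 = cc" "Im P0 = cc" "Re P1 = -cc" "Im P1 = cc" "Re P2 = -cc" "Im P2 = -cc"
  "Re P3 = cc" "Im P3 = -cc"
  unfolding P0_def P1_def P2_def P3_def by simp_all

lemma seg_points:
  assumes "0 < lm" "lm < 1"
  shows "lm *\<^sub>R vE + (1 - lm) *\<^sub>R vN \<in> CL" "lm *\<^sub>R vN + (1 - lm) *\<^sub>R vW \<in> CL"
    "lm *\<^sub>R vW + (1 - lm) *\<^sub>R vS \<in> CL" "lm *\<^sub>R vS + (1 - lm) *\<^sub>R vE \<in> CL"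
proof -
  have ge: "cc \<ge> 0" using cc_pos by simp
  have le: "-cc \<le> 0" using cc_pos by simp
  show "lm *\<^sub>R vE + (1 - lm) *\<^sub>R vN \<in> CL"
  proof (rule seg_gen[OF assms cmod_P(4), where hb=hN and hc=hW and hd=hS and vc=vW and vd=vS])
    show "\<And>z. hE z = H1 (z * cnj P3)" by (simp add: h_H1 P_facts)
    show "\<And>z. Fv z = hE z *\<^sub>R vE + hN z *\<^sub>R vN + hW z *\<^sub>R vW + hS z *\<^sub>R vS" by (rule Fv_perm(1))
    show "\<And>z. cmod z < 1 \<Longrightarrow> hE z + hN z + hW z + hS z = 1" by (rule sum_one)
    have c: "\<i> * P3 = P0" using P_rot(2) by simp
    show "\<And>f. f \<longlonglongrightarrow> \<i> * P3 \<Longrightarrow> (\<lambda>n. hW (f n)) \<longlonglongrightarrow> 0"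
      unfolding c by (rule h_lim0(3)[OF _ cmod_P(1)]) (simp_all add: Pcoords cc_ineq(3)[OF ge] cc_sq mult.assoc)
    show "\<And>f. f \<longlonglongrightarrow> \<i> * P3 \<Longrightarrow> (\<lambda>n. hS (f n)) \<longlonglongrightarrow> 0"
      unfolding c by (rule h_lim0(4)[OF _ cmod_P(1)]) (simp_all add: Pcoords cc_ineq(3)[OF ge] cc_sq mult.assoc)
  qed
  show "lm *\<^sub>R vN + (1 - lm) *\<^sub>R vW \<in> CL"
  proof (rule seg_gen[OF assms cmod_P(1), where hb=hW and hc=hE and hd=hS and vc=vE and vd=vS])
    show "\<And>z. hN z = H1 (z * cnj P0)" by (simp add: h_H1 P_facts)
    show "\<And>z. Fv z = hN z *\<^sub>R vN + hW z *\<^sub>R vW + hE z *\<^sub>R vE + hS z *\<^sub>R vS" by (rule Fv_perm(2))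
    show "\<And>z. cmod z < 1 \<Longrightarrow> hN z + hW z + hE z + hS z = 1" using sum_one by (simp add: add_ac)
    have c: "\<i> * P0 = P1" using P_rot(1) by simp
    show "\<And>f. f \<longlonglongrightarrow> \<i> * P0 \<Longrightarrow> (\<lambda>n. hE (f n)) \<longlonglongrightarrow> 0"
      unfolding c by (rule h_lim0(1)[OF _ cmod_P(2)]) (simp_all add: Pcoords cc_ineq(4)[OF le] cc_sq mult.assoc)
    show "\<And>f. f \<longlonglongrightarrow> \<i> * P0 \<Longrightarrow> (\<lambda>n. hS (f n)) \<longlonglongrightarrow> 0"
      unfolding c by (rule h_lim0(4)[OF _ cmod_P(2)]) (simp_all add: Pcoords cc_ineq(3)[OF ge] cc_sq mult.assoc)
  qed
  show "lm *\<^sub>R vW + (1 - lm) *\<^sub>R vS \<in> CL"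
  proof (rule seg_gen[OF assms cmod_P(2), where hb=hS and hc=hE and hd=hN and vc=vE and vd=vN])
    show "\<And>z. hW z = H1 (z * cnj P1)" by (simp add: h_H1 P_facts)
    show "\<And>z. Fv z = hW z *\<^sub>R vW + hS z *\<^sub>R vS + hE z *\<^sub>R vE + hN z *\<^sub>R vN" by (rule Fv_perm(3))
    show "\<And>z. cmod z < 1 \<Longrightarrow> hW z + hS z + hE z + hN z = 1" using sum_one by (simp add: add_ac)
    have c: "\<i> * P1 = P2" using P_rot(3) by simp
    show "\<And>f. f \<longlonglongrightarrow> \<i> * P1 \<Longrightarrow> (\<lambda>n. hE (f n)) \<longlonglongrightarrow> 0"
      unfolding c by (rule h_lim0(1)[OF _ cmod_P(3)]) (simp_all add: Pcoords cc_ineq(4)[OF le] cc_sq mult.assoc)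
    show "\<And>f. f \<longlonglongrightarrow> \<i> * P1 \<Longrightarrow> (\<lambda>n. hN (f n)) \<longlonglongrightarrow> 0"
      unfolding c by (rule h_lim0(2)[OF _ cmod_P(3)]) (simp_all add: Pcoords cc_ineq(4)[OF le] cc_sq mult.assoc)
  qed
  show "lm *\<^sub>R vS + (1 - lm) *\<^sub>R vE \<in> CL"
  proof (rule seg_gen[OF assms cmod_P(3), where hb=hE and hc=hN and hd=hW and vc=vN and vd=vW])
    show "\<And>z. hS z = H1 (z * cnj P2)" by (simp add: h_H1 P_facts)
    show "\<And>z. Fv z = hS z *\<^sub>R vS + hE z *\<^sub>R vE + hN z *\<^sub>R vN + hW z *\<^sub>R vW" by (rule Fv_perm(4))
    show "\<And>z. cmod z < 1 \<Longrightarrow> hS z + hE z + hN z + hW z = 1" using sum_one by (simp add: add_ac)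
    have c: "\<i> * P2 = P3" using P_rot(4) by simp
    show "\<And>f. f \<longlonglongrightarrow> \<i> * P2 \<Longrightarrow> (\<lambda>n. hN (f n)) \<longlonglongrightarrow> 0"
      unfolding c by (rule h_lim0(2)[OF _ cmod_P(4)]) (simp_all add: Pcoords cc_ineq(4)[OF le] cc_sq mult.assoc)
    show "\<And>f. f \<longlonglongrightarrow> \<i> * P2 \<Longrightarrow> (\<lambda>n. hW (f n)) \<longlonglongrightarrow> 0"
      unfolding c by (rule h_lim0(3)[OF _ cmod_P(4)]) (simp_all add: Pcoords cc_ineq(3)[OF ge] cc_sq mult.assoc)
  qed
qed

lemma seg_sub:
  assumes "va \<in> CL" "vb \<in> CL" "\<And>lm. 0 < lm \<Longrightarrow> lm < 1 \<Longrightarrow> lm *\<^sub>R va + (1 - lm) *\<^sub>R vb \<in> CL"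
  shows "closed_segment va vb \<subseteq> CL"
proof
  fix x assume "x \<in> closed_segment va vb"
  then obtain u where u: "0 \<le> u" "u \<le> 1" "x = (1 - u) *\<^sub>R va + u *\<^sub>R vb" unfolding in_segment(1) by blast
  consider "u = 0" | "u = 1" | "0 < u" "u < 1" using u by linarith
  then show "x \<in> CL"
  proof cases
    case 1 then show ?thesis using u assms(1) by simp
  next
    case 2 then show ?thesis using u assms(2) by simp
  next
    case 3
    have "(1 - u) *\<^sub>R va + (1 - (1 - u)) *\<^sub>R vb \<in> CL" by (rule assms(3)) (use 3 in auto)
    then show ?thesis using u by simp
  qed
qed

lemma cluster_eq: "CL = C_diamond"
proof
  show "CL \<subseteq> C_diamond" using cluster_sub by blast
  show "C_diamond \<subseteq> CL" unfolding C_diamond_def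
    using seg_sub[OF vertices_in(1) vertices_in(2) seg_points(1)]
      seg_sub[OF vertices_in(2) vertices_in(3) seg_points(2)]
      seg_sub[OF vertices_in(3) vertices_in(4) seg_points(3)]
      seg_sub[OF vertices_in(4) vertices_in(1) seg_points(4)] by blast
qed

theorem mainTheorem8:
  shows "harmonic_on zD (ball 0 1) \<and> harmonic_on thetaD (ball 0 1)
    \<and> (\<forall>\<zeta>\<in>ball 0 1. wirt zD \<zeta> * wirt (\<lambda>w. cnj (zD w)) \<zeta>
                        = (wirt (\<lambda>w. complex_of_real (thetaD w)) \<zeta>)^2)
    \<and> (\<forall>w\<in>arc (-pi/4) (pi/4). ((\<lambda>\<zeta>. (zD \<zeta>, thetaD \<zeta>)) \<longlongrightarrow> vE) (at w within ball 0 1))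
    \<and> (\<forall>w\<in>arc (pi/4) (3*pi/4). ((\<lambda>\<zeta>. (zD \<zeta>, thetaD \<zeta>)) \<longlongrightarrow> vN) (at w within ball 0 1))
    \<and> (\<forall>w\<in>arc (3*pi/4) (5*pi/4). ((\<lambda>\<zeta>. (zD \<zeta>, thetaD \<zeta>)) \<longlongrightarrow> vW) (at w within ball 0 1))
    \<and> (\<forall>w\<in>arc (5*pi/4) (7*pi/4). ((\<lambda>\<zeta>. (zD \<zeta>, thetaD \<zeta>)) \<longlongrightarrow> vS) (at w within ball 0 1))
    \<and> boundary_cluster_set (\<lambda>\<zeta>. (zD \<zeta>, thetaD \<zeta>)) = C_diamond"
proof -
  have F: "(\<lambda>\<zeta>. (zD \<zeta>, thetaD \<zeta>)) = Fv" by (rule ext) (simp add: Fv_def)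
  show ?thesis unfolding F
    using harmonic_parts wirt_identity arc_limits cluster_eq unfolding F by auto
qed

end
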